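(* The map $\mathcal W^{\mathrm m,\mathrm P}_r:\mathbf{roPG}\to\mathbb S^{\mathrm{m},\mathbb P}_r$ is compositional: for all roPGs of appropriate types, $\mathcal W^{\mathrm m,\mathrm P}_r(\mathcal C;\mathcal D)=\mathcal W^{\mathrm m,\mathrm P}_r(\mathcal C);\mathcal W^{\mathrm m,\mathrm P}_r(\mathcal D)$, $\mathcal W^{\mathrm m,\mathrm P}_r(\mathcal C\oplus\mathcal D)=\mathcal W^{\mathrm m,\mathrm P}_r(\mathcal C)\oplus\mathcal W^{\mathrm m,\mathrm P}_r(\mathcal D)$, and $\mathrm{tr}^l_{m,n}(\mathcal W^{\mathrm m,\mathrm P}_r(\mathcal E))=\mathcal W^{\mathrm m,\mathrm P}_r(\mathrm{tr}^l_{m,n}(\mathcal E))$.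
   Context: Notation: $[k]=\{1,\dots,k\}$; $X+Y$ disjoint union; $T(X)=X+\mathbb R\times X+\{\exists^*,\forall^*\}$; diagrammatic composition. An roMPG $\mathcal A:m\to n$ is $(m,n,Q,E,\rho,w)$: $Q$ finite set of positions, entrances $[m]$, exits $[n]$ (pairwise disjoint with $Q$), edges $E\subseteq([m]+Q)\times([n]+Q)$ with each entrance having exactly one successor and each exit at most one predecessor, $\rho:Q\to\{\exists,\forall\}$, $w:Q\to\mathbb R$. An roPG is an roMPG in which each element of $[m]+Q$ has at most one successor. For $\mathcal C:m\to l$, $\mathcal D:l\to n$, $\mathcal C;\mathcal D$ has positions $Q^{\mathcal C}+Q^{\mathcal D}$ with inherited roles/weights and edges: those of $\mathcal C$ from $[m]+Q^{\mathcal C}$ to $Q^{\mathcal C}$; those of $\mathcal D$ from $Q^{\mathcal D}$ to $[n]+Q^{\mathcal D}$; $(s,s')$ with $s\in[m]+Q^{\mathcal C}$, $s'\in[n]+Q^{\mathcal D}$ whenever some $i\in[l]$ has $(s,i)\in E^{\mathcal C}$ and $(i,s')\in E^{\mathcal D}$. $\mathcal C\oplus\mathcal D$ is the disjoint union with the second's entrances/exits shifted by the first's numbers of entrances/exits. For $\mathcal E:l+m\to l+n$, $\mathrm{tr}^l_{m,n}(\mathcal E):m\to n$ keeps positions, roles, weights, and $(s,s')\in([m]+Q)\times([n]+Q)$ is an edge iff there are $k\ge0$, $i_1,..,i_k\in[l]$ with $(\hat s,i_1),(i_1,i_2),..,(i_k,\hat s')\in E^{\mathcal E}$ ($k=0$: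 $(\hat s,\hat s')\in E^{\mathcal E}$), $i_j$ read as exit when target, entrance when source, $\hat s=l+s$ for open ends, $\hat s=s$ for positions. $\mathbf{roPG}$ has objects $\mathbb N$ and arrows roPGs up to isomorphism. For an roPG $\mathcal C:m\to n$ and $i\in[m]$, $\pi^{\mathcal C}_i=(s_j)_{j\in J}$ ($J=\{0..M\}$ or $\mathbb N$) is the unique maximal sequence with $s_0=i$, $(s_j,s_{j+1})\in E$. Its denotation $[\![\pi]\!]\in T([n])$: $s_1$ if $J=\{0,1\}$ and $s_1$ is an exit; $(\sum_{j=1}^{M-1}w(s_j),s_M)$ if $M\ge2$, $s_M$ an exit; $\exists^*$ if $J$ finite and $s_M$ a $\forall$-position, or $J$ infinite with $\liminf_N\frac1N\sum_{j=1}^Nw(s_j)\ge0$; $\forall^*$ if $J$ finite and $s_M$ an $\exists$-position, or $J$ infinite with that liminf $<0$. $\mathbb S^{\mathrm{m},\mathbb P}_r$: objects $\mathbb N$; arrows $f:m\to n$ are functions $[m]\to T([n])$ with: for $i\ne j$, $f(i)\notin[n]$ or $f(j)\notin\{f(i)\}\cup\mathbb R\times\{f(i)\}$; hom-sets ordered pointwise by the least order on $T([n])$ with $(r_1,i)\le(r_2,i)$ if $r_1\ge r_2$, $\exists^*\le z\le\forall^*$. Operations: $(f;g)(i)=f(i)$ if $f(i)\in\{\exists^*,\forall^*\}$; $g(j)$ if $f(i)=j$; $g(j)$ if $f(i)=(r,j)$, $g(j)\in\{\exists^*,\forall^*\}$; $(r,k)$ if $f(i)=(r,j)$, $g(j)=k$;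 $(r+r',k)$ if $f(i)=(r,j)$, $g(j)=(r',k)$. $(f\oplus g)(i)=f(i)$ ($i\le m$), $(f\oplus g)(m+i)$ is $g(i)$ with its index $j$ (if any) shifted to $n+j$. Trace of $f:l+m\to l+n$ at $i$: $v_0=l+i$; if $j=0$ or $v_j\in[l]$, $v_{j+1}=f(v_j)$; if $v_j=(r,k)$, $k\in[l]$, $v_{j+1}=f(k)$; otherwise stop. If finite $(v_0..v_K)$ with $S$ the sum of first components of $v_j\in\mathbb R\times[l+n]$ ($1\le j\le K$): $v_K$ if $v_K\in\{\exists^*,\forall^*\}$; $k$ if $v_K=l+k$ and $v_j\in[l]$ for $1\le j<K$; $(S,k)$ if $v_K=l+k$ and some earlier $v_j\in\mathbb R\times[l]$; $(S,k)$ if $v_K=(r,l+k)$. If infinite, with $w'_t$ the first components of the (infinitely many) entries in $\mathbb R\times[l]$: $\exists^*$ if $\liminf_N\frac1N\sum_{t\le N}w'_t\ge0$, else $\forall^*$. $\mathcal W^{\mathrm m,\mathrm P}_r$ is the identity on objects and sends $\mathcal C:m\to n$ to $i\mapsto[\![\pi^{\mathcal C}_i]\!]$. *)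

theory Defs
  imports Complex_Main "HOL-Library.Extended_Real" "HOL-Library.Infinite_Set"
    "HOL-Library.Liminf_Limsup"
begin

datatype player = PExists | PForall

text \<open>Nodes: entrances En i (i in [m]), exits Ex j (j in [n]) and positions Po q.
  Indices are 1-based as in the paper.\<close>
datatype 'q node = En nat | Ex nat | Po 'q

record 'q game =
  ent :: nat
  ext :: nat
  pos :: "'q set"
  edges :: "('q node \<times> 'q node) set"
  role :: "'q \<Rightarrow> player"
  wt :: "'q \<Rightarrow> real"

definition srcs :: "'q game \<Rightarrow> 'q node set" where
  "srcs G = En ` {1..ent G} \<union> Po ` pos G"

definition tgts :: "'q game \<Rightarrow> 'q node set" where
  "tgts G = Ex ` {1..ext G} \<union> Po ` pos G"

definition is_roMPG :: "'q game \<Rightarrow> bool" where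
  "is_roMPG G \<longleftrightarrow> finite (pos G)
     \<and> edges G \<subseteq> srcs G \<times> tgts G
     \<and> (\<forall>i\<in>{1..ent G}. \<exists>!t. (En i, t) \<in> edges G)
     \<and> (\<forall>j\<in>{1..ext G}. \<forall>s s'. (s, Ex j) \<in> edges G \<and> (s', Ex j) \<in> edges G \<longrightarrow> s = s')"

definition is_roPG :: "'q game \<Rightarrow> bool" where
  "is_roPG G \<longleftrightarrow> is_roMPG G
     \<and> (\<forall>s\<in>srcs G. \<forall>t t'. (s, t) \<in> edges G \<and> (s, t') \<in> edges G \<longrightarrow> t = t')"

definition gseq :: "'a game \<Rightarrow> 'b game \<Rightarrow> ('a + 'b) game" where
  "gseq C D = \<lparr> ent = ent C, ext = ext D,
     pos = Inl ` pos C \<union> Inr ` pos D,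
     edges = {(map_node Inl s, Po (Inl q)) | s q. (s, Po q) \<in> edges C}
           \<union> {(Po (Inr q), map_node Inr t) | q t. (Po q, t) \<in> edges D}
           \<union> {(map_node Inl s, map_node Inr t) | s t.
                 \<exists>i\<in>{1..ext C}. (s, Ex i) \<in> edges C \<and> (En i, t) \<in> edges D},
     role = case_sum (role C) (role D),
     wt = case_sum (wt C) (wt D) \<rparr>"

fun shift_node :: "nat \<Rightarrow> nat \<Rightarrow> 'b node \<Rightarrow> ('a + 'b) node" where
  "shift_node a b (En i) = En (a + i)"
| "shift_node a b (Ex j) = Ex (b + j)"
| "shift_node a b (Po q) = Po (Inr q)"

definition gpar :: "'a game \<Rightarrow> 'b game \<Rightarrow> ('a + 'b) game" where
  "gpar C D = \<lparr> ent = ent C + ent D, ext = ext C + ext D,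
     pos = Inl ` pos C \<union> Inr ` pos D,
     edges = (\<lambda>(s, t). (map_node Inl s, map_node Inl t)) ` edges C
           \<union> (\<lambda>(s, t). (shift_node (ent C) (ext C) s, shift_node (ent C) (ext C) t)) ` edges D,
     role = case_sum (role C) (role D),
     wt = case_sum (wt C) (wt D) \<rparr>"

text \<open>chainE E s [i1,..,ik] t: (s,i1),(i1,i2),..,(ik,t) are edges, where i_j is read
  as an exit when it is a target and as an entrance when it is a source.\<close>
fun chainE :: "('q node \<times> 'q node) set \<Rightarrow> 'q node \<Rightarrow> nat list \<Rightarrow> 'q node \<Rightarrow> bool" where
  "chainE E s [] t \<longleftrightarrow> (s, t) \<in> E"
| "chainE E s (i # is) t \<longleftrightarrow> (s, Ex i) \<in> E \<and> chainE E (En i) is t"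

fun hat_src :: "nat \<Rightarrow> 'q node \<Rightarrow> 'q node" where
  "hat_src l (En i) = En (l + i)"
| "hat_src l s = s"

fun hat_tgt :: "nat \<Rightarrow> 'q node \<Rightarrow> 'q node" where
  "hat_tgt l (Ex j) = Ex (l + j)"
| "hat_tgt l t = t"

definition gtrace :: "nat \<Rightarrow> nat \<Rightarrow> nat \<Rightarrow> 'q game \<Rightarrow> 'q game" where
  "gtrace l m n G = \<lparr> ent = m, ext = n, pos = pos G,
     edges = {(s, t). s \<in> En ` {1..m} \<union> Po ` pos G \<and> t \<in> Ex ` {1..n} \<union> Po ` pos G
                \<and> (\<exists>is. set is \<subseteq> {1..l} \<and> chainE (edges G) (hat_src l s) is (hat_tgt l t))},
     role = role G, wt = wt G \<rparr>"

section \<open>The semantic category: T(X) = X + R x X + {E*, A*}\<close>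

datatype tval = Idx nat | Wgt real nat | EStar | AStar

definition semcomp :: "(nat \<Rightarrow> tval) \<Rightarrow> (nat \<Rightarrow> tval) \<Rightarrow> nat \<Rightarrow> tval" where
  "semcomp f g i = (case f i of
      EStar \<Rightarrow> EStar
    | AStar \<Rightarrow> AStar
    | Idx j \<Rightarrow> g j
    | Wgt r j \<Rightarrow> (case g j of EStar \<Rightarrow> EStar | AStar \<Rightarrow> AStar
                  | Idx k \<Rightarrow> Wgt r k | Wgt r' k \<Rightarrow> Wgt (r + r') k))"

fun tshift :: "nat \<Rightarrow> tval \<Rightarrow> tval" where
  "tshift n (Idx j) = Idx (n + j)"
| "tshift n (Wgt r j) = Wgt r (n + j)"
| "tshift n v = v"

text \<open>f : m \<rightarrow> n, g : m' \<rightarrow> n'\<close>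
definition spar :: "nat \<Rightarrow> nat \<Rightarrow> (nat \<Rightarrow> tval) \<Rightarrow> (nat \<Rightarrow> tval) \<Rightarrow> nat \<Rightarrow> tval" where
  "spar m n f g i = (if i \<le> m then f i else tshift n (g (i - m)))"

text \<open>The sequence v_0, v_1, ... of the trace at input i (None = stopped).\<close>
primrec vseq :: "nat \<Rightarrow> (nat \<Rightarrow> tval) \<Rightarrow> nat \<Rightarrow> nat \<Rightarrow> tval option" where
  "vseq l f i 0 = Some (Idx (l + i))"
| "vseq l f i (Suc j) = (case vseq l f i j of
      None \<Rightarrow> None
    | Some v \<Rightarrow> (if j = 0 then Some (f (l + i)) else
        (case v of
           Idx k \<Rightarrow> (if k \<in> {1..l} then Some (f k) else None)
         | Wgt r k \<Rightarrow> (if k \<in> {1..l} then Some (f k) else None)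
         | _ \<Rightarrow> None)))"

text \<open>Trace of f : l + m \<rightarrow> l + n, evaluated at i.\<close>
definition strace :: "nat \<Rightarrow> nat \<Rightarrow> (nat \<Rightarrow> tval) \<Rightarrow> nat \<Rightarrow> tval" where
  "strace l n f i =
    (if \<exists>j. vseq l f i (Suc j) = None then
       (let K = (LEAST j. vseq l f i (Suc j) = None);
            vK = the (vseq l f i K);
            S = (\<Sum>j\<in>{1..K}. (case the (vseq l f i j) of
                    Wgt r k \<Rightarrow> (if k \<in> {1..l + n} then r else 0) | _ \<Rightarrow> 0))
        in (case vK of
              EStar \<Rightarrow> EStar
            | AStar \<Rightarrow> AStar
            | Idx x \<Rightarrow> (if (\<forall>j\<in>{1..<K}. \<exists>k\<in>{1..l}. the (vseq l f i j) = Idx k)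
                         then Idx (x - l) else Wgt S (x - l))
            | Wgt r x \<Rightarrow> Wgt S (x - l)))
     else
       (let Wset = {j. \<exists>r k. vseq l f i j = Some (Wgt r k) \<and> k \<in> {1..l}};
            w' = (\<lambda>t. case the (vseq l f i (enumerate Wset t)) of Wgt r k \<Rightarrow> r | _ \<Rightarrow> 0)
        in (if Liminf sequentially (\<lambda>N. ereal ((\<Sum>t<N. w' t) / real N)) \<ge> 0
            then EStar else AStar)))"

text \<open>The maximal path pi_i from entrance i (None = sequence has ended).\<close>
primrec gpath :: "'q game \<Rightarrow> nat \<Rightarrow> nat \<Rightarrow> 'q node option" where
  "gpath G i 0 = Some (En i)"
| "gpath G i (Suc k) = (case gpath G i k of
      None \<Rightarrow> None
    | Some s \<Rightarrow> (if \<exists>t. (s, t) \<in> edges G then Some (THE t. (s, t) \<in> edges G) else None))"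

fun nodew :: "'q game \<Rightarrow> 'q node \<Rightarrow> real" where
  "nodew G (Po q) = wt G q"
| "nodew G _ = 0"

definition Wsem :: "'q game \<Rightarrow> nat \<Rightarrow> tval" where
  "Wsem G i =
    (if \<exists>k. gpath G i (Suc k) = None then
       (let M = (LEAST k. gpath G i (Suc k) = None)
        in (case the (gpath G i M) of
              Ex j \<Rightarrow> (if M = 1 then Idx j
                        else Wgt (\<Sum>k\<in>{1..M - 1}. nodew G (the (gpath G i k))) j)
            | Po q \<Rightarrow> (if role G q = PForall then EStar else AStar)
            | En _ \<Rightarrow> EStar))
     else
       (if Liminf sequentially
             (\<lambda>N. ereal ((\<Sum>k\<in>{1..N}. nodew G (the (gpath G i k))) / real N)) \<ge> 0
        then EStar else AStar))"

end

theory Submission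
  imports Defs
begin

definition nxt :: "'q game \<Rightarrow> 'q node \<Rightarrow> 'q node option" where
  "nxt G s = (if \<exists>t. (s,t) \<in> edges G then Some (THE t. (s,t) \<in> edges G) else None)"

primrec walk :: "'q game \<Rightarrow> 'q node \<Rightarrow> nat \<Rightarrow> 'q node option" where
  "walk G s 0 = Some s"
| "walk G s (Suc k) = (case walk G s k of None \<Rightarrow> None | Some x \<Rightarrow> nxt G x)"

lemma gpath_walk: "gpath G i k = walk G (En i) k"
  by (induction k) (auto simp: nxt_def split: option.splits)

lemma walk_Suc': "walk G s (Suc k) = (case nxt G s of None \<Rightarrow> None | Some t \<Rightarrow> walk G t k)"
  by (induction k) (auto split: option.splits)

declare walk.simps(2)[simp del]

lemma walk_None_mono: "walk G s k = None \<Longrightarrow> k \<le> k' \<Longrightarrow> walk G s k' = None"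
  by (induction k' ) (auto simp: le_Suc_eq walk.simps(2))

datatype fterm = FEx nat | FStar tval
datatype run = RFin "real list" fterm | RInf "nat \<Rightarrow> real"

fun isEx :: "'q node \<Rightarrow> bool" where
  "isEx (Ex _) = True" | "isEx _ = False"

definition dterm :: "'q game \<Rightarrow> 'q node \<Rightarrow> fterm" where
  "dterm G s = (case s of Ex j \<Rightarrow> FEx j
     | Po q \<Rightarrow> FStar (if role G q = PForall then EStar else AStar) | En _ \<Rightarrow> FStar EStar)"

definition runOf :: "'q game \<Rightarrow> 'q node \<Rightarrow> run" where
  "runOf G s = (if \<exists>k. walk G s (Suc k) = None then
     (let M = (LEAST k. walk G s (Suc k) = None); x = the (walk G s M) in
       RFin (map (\<lambda>k. nodew G (the (walk G s k))) [1..<(if isEx x then M else Suc M)]) (dterm G x))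
    else RInf (\<lambda>k. nodew G (the (walk G s (Suc k)))))"

fun pcons :: "real \<Rightarrow> run \<Rightarrow> run" where
  "pcons w (RFin ps t) = RFin (w # ps) t"
| "pcons w (RInf ws) = RInf (case_nat w ws)"

definition stepf :: "'q game \<Rightarrow> ('q node \<Rightarrow> run) \<Rightarrow> 'q node \<Rightarrow> run" where
  "stepf G F s = (case nxt G s of None \<Rightarrow> RFin [] (dterm G s)
     | Some t \<Rightarrow> (if isEx t \<and> nxt G t = None then RFin [] (dterm G t) else pcons (nodew G t) (F t)))"

lemma isEx_cases: "isEx x \<longleftrightarrow> (\<exists>j. x = Ex j)"
  by (cases x) auto

lemma runOf_unf: "runOf G s = stepf G (runOf G) s"
proof (cases "nxt G s")
  case None
  then have w1: "walk G s (Suc 0) = None" by (simp add: walk.simps(2))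
  then have L: "(LEAST k. walk G s (Suc k) = None) = 0" by (intro Least_equality) auto
  show ?thesis using None w1 unfolding runOf_def stepf_def
    by (auto simp: L Let_def dterm_def split: node.splits intro!: exI[of _ 0])
next
  case (Some t)
  have ws: "walk G s (Suc k) = walk G t k" for k using Some walk_Suc'[of G s k] by simp
  show ?thesis
  proof (cases "\<exists>k. walk G t (Suc k) = None")
    case True
    define Mt where "Mt = (LEAST k. walk G t (Suc k) = None)"
    have ex_s: "\<exists>k. walk G s (Suc k) = None" using True ws by auto
    have Ms: "(LEAST k. walk G s (Suc k) = None) = Suc Mt"
    proof -
      have "(LEAST k. walk G s (Suc k) = None) = (LEAST k. walk G t k = None)" by (simp add: ws)
      also have "\<dots> = Suc (LEAST k. walk G t (Suc k) = None)"
        using True Least_Suc[of "\<lambda>k. walk G t k = None"] by fastforce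
      finally show ?thesis by (simp add: Mt_def)
    qed
    define x where "x = the (walk G t Mt)"
    have xs: "the (walk G s (Suc Mt)) = x" by (simp add: ws x_def)
    define ct where "ct = (if isEx x then Mt else Suc Mt)"
    have rt: "runOf G t = RFin (map (\<lambda>k. nodew G (the (walk G t k))) [1..<ct]) (dterm G x)"
      unfolding runOf_def using True by (simp add: Let_def Mt_def[symmetric] x_def[symmetric] ct_def)
    have rs: "runOf G s = RFin (map (\<lambda>k. nodew G (the (walk G s k))) [1..<Suc ct]) (dterm G x)"
      unfolding runOf_def using ex_s by (simp add: Let_def Ms xs ct_def)
    have ct0: "ct = 0 \<longleftrightarrow> isEx t \<and> nxt G t = None"
    proof
      assume "ct = 0"
      then have M0: "Mt = 0" and ix: "isEx x" unfolding ct_def by (auto split: if_splits)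
      have "walk G t (Suc Mt) = None" using LeastI_ex[OF True] unfolding Mt_def by simp
      then have "nxt G t = None" using M0 by (simp add: walk.simps(2))
      moreover have "x = t" using M0 by (simp add: x_def)
      ultimately show "isEx t \<and> nxt G t = None" using ix by simp
    next
      assume a: "isEx t \<and> nxt G t = None"
      then have "walk G t (Suc 0) = None" by (simp add: walk.simps(2))
      then have M0: "Mt = 0" unfolding Mt_def by (intro Least_equality) auto
      then have "x = t" by (simp add: x_def)
      then show "ct = 0" using a M0 by (simp add: ct_def)
    qed
    show ?thesis
    proof (cases "ct = 0")
      case True
      then have "Mt = 0" by (auto simp: ct_def split: if_splits)
      then have "x = t" by (simp add: x_def)
      then show ?thesis using rs True ct0 Some by (simp add: stepf_def)
    next
      case False
      have "[1..<Suc ct] = 1 # map Suc [1..<ct]"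
        using False by (simp add: upt_conv_Cons map_Suc_upt)
      then have "runOf G s = pcons (nodew G t) (runOf G t)"
        using rs rt by (simp add: ws o_def)
      moreover have "\<not> (isEx t \<and> nxt G t = None)" using False ct0 by simp
      ultimately show ?thesis using Some by (auto simp: stepf_def)
    qed
  next
    case False
    have nex_s: "\<not> (\<exists>k. walk G s (Suc k) = None)"
    proof
      assume "\<exists>k. walk G s (Suc k) = None"
      then obtain k where "walk G t k = None" by (auto simp: ws)
      then show False using False by (cases k) (auto simp del: not_None_eq)
    qed
    have rt: "runOf G t = RInf (\<lambda>k. nodew G (the (walk G t (Suc k))))"
      unfolding runOf_def using False by (simp del: not_None_eq)
    have "(\<lambda>k. nodew G (the (walk G s (Suc k)))) = case_nat (nodew G t) (\<lambda>k. nodew G (the (walk G t (Suc k))))"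
      by (rule ext, case_tac k) (simp_all add: ws)
    moreover have "runOf G s = RInf (\<lambda>k. nodew G (the (walk G s (Suc k))))"
      unfolding runOf_def using nex_s by (simp del: not_None_eq)
    ultimately have "runOf G s = pcons (nodew G t) (runOf G t)"
      using rt by simp
    moreover have "nxt G t \<noteq> None" using False walk.simps(2)[of G t 0] by (metis walk.simps(1) option.simps(5))
    then have "\<not> (isEx t \<and> nxt G t = None)" by simp
    ultimately show ?thesis using Some by (auto simp: stepf_def)
  qed
qed


lemma uniq_fin:
  assumes f1: "\<forall>s\<in>A. F1 s = stepf G F1 s" and f2: "\<forall>s\<in>A. F2 s = stepf G F2 s"
    and cl: "\<forall>s\<in>A. \<forall>t. nxt G s = Some t \<longrightarrow> \<not> (isEx t \<and> nxt G t = None) \<longrightarrow> t \<in> A"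
  shows "s \<in> A \<Longrightarrow> F1 s = RFin ps tm \<Longrightarrow> F2 s = RFin ps tm"
proof (induction ps arbitrary: s)
  case Nil
  show ?case
  proof (cases "nxt G s")
    case None
    then show ?thesis using Nil f1 f2 by (auto simp: stepf_def)
  next
    case (Some t)
    show ?thesis
    proof (cases "isEx t \<and> nxt G t = None")
      case True
      then show ?thesis using Nil f1 f2 Some by (auto simp: stepf_def)
    next
      case False
      then have "F1 s = pcons (nodew G t) (F1 t)" using Nil f1 Some by (auto simp: stepf_def)
      then show ?thesis using Nil by (cases "F1 t") auto
    qed
  qed
next
  case (Cons p ps)
  show ?case
  proof (cases "nxt G s")
    case None
    then show ?thesis using Cons f1 by (auto simp: stepf_def)
  next
    case (Some t)
    show ?thesis
    proof (cases "isEx t \<and> nxt G t = None")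
      case True
      then show ?thesis using Cons f1 Some by (auto simp: stepf_def)
    next
      case False
      then have e1: "F1 s = pcons (nodew G t) (F1 t)" using Cons f1 Some by (auto simp: stepf_def)
      have e2: "F2 s = pcons (nodew G t) (F2 t)" using False Cons f2 Some by (auto simp: stepf_def)
      have tA: "t \<in> A" using cl Cons Some False by blast
      from e1 Cons.prems have "F1 t = RFin ps tm" "p = nodew G t" by (cases "F1 t"; auto)+
      then show ?thesis using Cons.IH[OF tA] e2 by simp
    qed
  qed
qed

lemma uniq:
  assumes f1: "\<forall>s\<in>A. F1 s = stepf G F1 s" and f2: "\<forall>s\<in>A. F2 s = stepf G F2 s"
    and cl: "\<forall>s\<in>A. \<forall>t. nxt G s = Some t \<longrightarrow> \<not> (isEx t \<and> nxt G t = None) \<longrightarrow> t \<in> A"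
    and sA: "s \<in> A"
  shows "F1 s = F2 s"
proof (cases "F1 s")
  case (RFin ps tm)
  then show ?thesis using uniq_fin[OF f1 f2 cl sA] by simp
next
  case (RInf ws1)
  have nf2: "\<And>ps tm. F2 s \<noteq> RFin ps tm"
    using uniq_fin[OF f2 f1 cl sA] RInf by fastforce
  then obtain ws2 where RI2: "F2 s = RInf ws2" by (cases "F2 s") auto
  have "\<forall>s a b. s \<in> A \<longrightarrow> F1 s = RInf a \<longrightarrow> F2 s = RInf b \<longrightarrow> a k = b k" for k
  proof (induction k)
    case 0
    show ?case
    proof (intro allI impI)
      fix s a b assume sA: "s \<in> A" and a: "F1 s = RInf a" and b: "F2 s = RInf b"
      obtain t where Some: "nxt G s = Some t" using a f1 sA by (cases "nxt G s") (auto simp: stepf_def)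
      have False0: "\<not> (isEx t \<and> nxt G t = None)"
      proof
        assume "isEx t \<and> nxt G t = None"
        then have "F1 s = RFin [] (dterm G t)" using f1 sA Some by (simp add: stepf_def)
        then show False using a by simp
      qed
      have e1: "F1 s = pcons (nodew G t) (F1 t)" using False0 f1 sA Some by (auto simp: stepf_def)
      have e2: "F2 s = pcons (nodew G t) (F2 t)" using False0 f2 sA Some by (auto simp: stepf_def)
      show "a 0 = b 0" using e1 e2 a b by (cases "F1 t"; cases "F2 t") auto
    qed
  next
    case (Suc k)
    show ?case
    proof (intro allI impI)
      fix s a b assume sA: "s \<in> A" and a: "F1 s = RInf a" and b: "F2 s = RInf b"
      obtain t where Some: "nxt G s = Some t" using a f1 sA by (cases "nxt G s") (auto simp: stepf_def)
      have False0: "\<not> (isEx t \<and> nxt G t = None)"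
      proof
        assume "isEx t \<and> nxt G t = None"
        then have "F1 s = RFin [] (dterm G t)" using f1 sA Some by (simp add: stepf_def)
        then show False using a by simp
      qed
      have e1: "F1 s = pcons (nodew G t) (F1 t)" using False0 f1 sA Some by (auto simp: stepf_def)
      have e2: "F2 s = pcons (nodew G t) (F2 t)" using False0 f2 sA Some by (auto simp: stepf_def)
      have tA: "t \<in> A" using cl sA Some False0 by blast
      obtain a' where a': "F1 t = RInf a'" "a = case_nat (nodew G t) a'" using e1 a by (cases "F1 t") auto
      obtain b' where b': "F2 t = RInf b'" "b = case_nat (nodew G t) b'" using e2 b by (cases "F2 t") auto
      show "a (Suc k) = b (Suc k)" using Suc tA a' b' by simp
    qed
  qed
  then have "ws1 = ws2" using RInf RI2 sA by blast
  then show ?thesis using RInf RI2 by simp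
qed

lemma uniq_runOf:
  assumes f: "\<forall>s\<in>A. F s = stepf G F s"
    and cl: "\<forall>s\<in>A. \<forall>t. nxt G s = Some t \<longrightarrow> \<not> (isEx t \<and> nxt G t = None) \<longrightarrow> t \<in> A"
    and sA: "s \<in> A"
  shows "F s = runOf G s"
  using uniq[OF f _ cl sA, of "runOf G"] runOf_unf by blast


definition mpv :: "(nat \<Rightarrow> real) \<Rightarrow> bool" where
  "mpv ws \<longleftrightarrow> 0 \<le> Liminf sequentially (\<lambda>N. ereal ((\<Sum>k<N. ws k) / real N))"

lemma mpv_iff: "mpv ws \<longleftrightarrow> (\<forall>y::real. y < 0 \<longrightarrow> (\<exists>N0. \<forall>N\<ge>N0. y * real N < (\<Sum>k<N. ws k)))"
proof
  assume m: "mpv ws"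
  show "\<forall>y::real. y < 0 \<longrightarrow> (\<exists>N0. \<forall>N\<ge>N0. y * real N < (\<Sum>k<N. ws k))"
  proof (intro allI impI)
    fix y :: real assume y: "y < 0"
    have y': "ereal y < 0" using y by simp
    have "eventually (\<lambda>N. ereal y < ereal ((\<Sum>k<N. ws k) / real N)) sequentially"
      using m y' unfolding mpv_def le_Liminf_iff by blast
    then obtain N0 where N0: "\<forall>N\<ge>N0. y < (\<Sum>k<N. ws k) / real N"
      by (auto simp: eventually_sequentially)
    show "\<exists>N0. \<forall>N\<ge>N0. y * real N < (\<Sum>k<N. ws k)"
    proof (intro exI[of _ "Suc N0"] allI impI)
      fix N assume "Suc N0 \<le> N"
      then have "N \<ge> N0" "real N > 0" by auto
      then show "y * real N < (\<Sum>k<N. ws k)" using N0 by (auto simp: pos_less_divide_eq)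
    qed
  qed
next
  assume h: "\<forall>y::real. y < 0 \<longrightarrow> (\<exists>N0. \<forall>N\<ge>N0. y * real N < (\<Sum>k<N. ws k))"
  show "mpv ws" unfolding mpv_def le_Liminf_iff
  proof (intro allI impI)
    fix y :: ereal assume y0: "y < 0"
    show "eventually (\<lambda>N. y < ereal ((\<Sum>k<N. ws k) / real N)) sequentially"
    proof (cases y)
      case (real r)
      then have "r < 0" using y0 by simp
      then obtain N0 where N0: "\<forall>N\<ge>N0. r * real N < (\<Sum>k<N. ws k)" using h by blast
      have "\<forall>N\<ge>Suc N0. r < (\<Sum>k<N. ws k) / real N"
      proof (intro allI impI)
        fix N assume "Suc N0 \<le> N"
        then have "N \<ge> N0" "real N > 0" by auto
        then show "r < (\<Sum>k<N. ws k) / real N" using N0 by (auto simp: pos_less_divide_eq)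
      qed
      then show ?thesis using real by (auto simp: eventually_sequentially)
    next
      case PInf
      then show ?thesis using y0 by simp
    next
      case MInf
      then show ?thesis by simp
    qed
  qed
qed

lemma mpv_bd:
  assumes d: "\<forall>N. \<bar>(\<Sum>k<N. a k) - (\<Sum>k<N. b k)\<bar> \<le> C" and ma: "mpv a"
  shows "mpv b"
  unfolding mpv_iff
proof (intro allI impI)
  fix y :: real assume y: "y < 0"
  then have "y / 2 < 0" by simp
  then obtain N0 where N0: "\<forall>N\<ge>N0. (y/2) * real N < (\<Sum>k<N. a k)" using ma unfolding mpv_iff by blast
  define N1 where "N1 = max N0 (nat \<lceil>2 * C / (- y)\<rceil>)"
  show "\<exists>N0. \<forall>N\<ge>N0. y * real N < (\<Sum>k<N. b k)"
  proof (intro exI[of _ N1] allI impI)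
    fix N assume N: "N1 \<le> N"
    then have a: "(y/2) * real N < (\<Sum>k<N. a k)" using N0 N1_def by auto
    have "real N \<ge> 2 * C / (- y)" using N N1_def by linarith
    then have "(- y / 2) * real N \<ge> (- y / 2) * (2 * C / (- y))"
      using y by (intro mult_left_mono) auto
    also have "(- y / 2) * (2 * C / (- y)) = C" using y by (simp add: field_simps)
    finally have c: "(- y / 2) * real N \<ge> C" .
    have "(\<Sum>k<N. b k) \<ge> (\<Sum>k<N. a k) - C" using d[rule_format, of N] by linarith
    then show "y * real N < (\<Sum>k<N. b k)" using a c by (simp add: algebra_simps)
  qed
qed

lemma mpv_bd_iff:
  assumes d: "\<forall>N. \<bar>(\<Sum>k<N. a k) - (\<Sum>k<N. b k)\<bar> \<le> C"
  shows "mpv a \<longleftrightarrow> mpv b"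
proof -
  have "\<forall>N. \<bar>(\<Sum>k<N. b k) - (\<Sum>k<N. a k)\<bar> \<le> C" using d by (simp add: abs_minus_commute)
  then show ?thesis using mpv_bd d by blast
qed

lemma mpv_cons:
  assumes bd: "\<forall>k. \<bar>ws k\<bar> \<le> W"
  shows "mpv (case_nat p ws) \<longleftrightarrow> mpv ws"
proof (rule mpv_bd_iff[where C = "\<bar>p\<bar> + W"], rule allI)
  fix N
  show "\<bar>(\<Sum>k<N. case_nat p ws k) - (\<Sum>k<N. ws k)\<bar> \<le> \<bar>p\<bar> + W"
  proof (cases N)
    case 0
    then show ?thesis using bd[rule_format, of 0] by simp
  next
    case (Suc M)
    have "(\<Sum>k<N. case_nat p ws k) = p + (\<Sum>k<M. ws k)"
      unfolding Suc sum.lessThan_Suc_shift by simp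
    moreover have "(\<Sum>k<N. ws k) = (\<Sum>k<M. ws k) + ws M" using Suc by simp
    ultimately show ?thesis using bd[rule_format, of M] by simp
  qed
qed

definition shl :: "real list \<Rightarrow> (nat \<Rightarrow> real) \<Rightarrow> nat \<Rightarrow> real" where
  "shl ps ws k = (if k < length ps then ps ! k else ws (k - length ps))"

lemma shl_Nil[simp]: "shl [] ws = ws"
  by (rule ext) (simp add: shl_def)

lemma shl_Cons: "shl (p # ps) ws = case_nat p (shl ps ws)"
  by (rule ext, case_tac x) (auto simp: shl_def)

lemma shl_append: "shl (xs @ ys) ws = shl xs (shl ys ws)"
  by (induction xs) (simp_all add: shl_Cons)

definition bnd :: "(nat \<Rightarrow> real) \<Rightarrow> bool" where
  "bnd ws \<longleftrightarrow> (\<exists>W. \<forall>k. \<bar>ws k\<bar> \<le> W)"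

lemma bnd_cons: "bnd ws \<Longrightarrow> bnd (case_nat p ws)"
  unfolding bnd_def
proof -
  assume "\<exists>W. \<forall>k. \<bar>ws k\<bar> \<le> W"
  then obtain W where W: "\<forall>k. \<bar>ws k\<bar> \<le> W" by blast
  have "\<forall>k. \<bar>case_nat p ws k\<bar> \<le> max \<bar>p\<bar> W"
  proof
    fix k show "\<bar>case_nat p ws k\<bar> \<le> max \<bar>p\<bar> W" using W by (cases k) (force simp: le_max_iff_disj)+
  qed
  then show "\<exists>W. \<forall>k. \<bar>case_nat p ws k\<bar> \<le> W" by blast
qed

lemma bnd_shl: "bnd ws \<Longrightarrow> bnd (shl ps ws)"
  by (induction ps) (simp_all add: shl_Cons bnd_cons)

lemma mpv_cons': "bnd ws \<Longrightarrow> mpv (case_nat p ws) \<longleftrightarrow> mpv ws"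
  unfolding bnd_def using mpv_cons by blast

lemma mpv_shl: "bnd ws \<Longrightarrow> mpv (shl ps ws) \<longleftrightarrow> mpv ws"
  by (induction ps) (simp_all add: shl_Cons mpv_cons' bnd_shl)

lemma sum_split_add: "(\<Sum>k<m + n. f k) = (\<Sum>k<m. f k) + (\<Sum>k<n. f (m + k))"
  for f :: "nat \<Rightarrow> real"
  by (induction n) (simp_all add: add.assoc)

lemma sum_abs_le: "(\<forall>k. \<bar>f k\<bar> \<le> W) \<Longrightarrow> \<bar>(\<Sum>k<n. f k)\<bar> \<le> real n * W"
  for f :: "nat \<Rightarrow> real"
proof -
  assume W: "\<forall>k. \<bar>f k\<bar> \<le> W"
  have "\<bar>(\<Sum>k<n. f k)\<bar> \<le> (\<Sum>k<n. \<bar>f k\<bar>)" by (rule sum_abs)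
  also have "\<dots> \<le> (\<Sum>k<n. W)" using W by (intro sum_mono) auto
  finally show ?thesis by simp
qed

lemma exists_block:
  fixes b :: "nat \<Rightarrow> nat"
  assumes b0: "b 0 = 0" and inc: "\<forall>t. b t < b (Suc t)"
  shows "\<exists>t. b t \<le> n \<and> n < b (Suc t)"
proof (induction n)
  case 0
  show ?case using b0 inc[rule_format, of 0] by (intro exI[of _ 0]) auto
next
  case (Suc n)
  then obtain t where t: "b t \<le> n" "n < b (Suc t)" by blast
  show ?case
  proof (cases "Suc n < b (Suc t)")
    case True
    then show ?thesis using t by (intro exI[of _ t]) auto
  next
    case False
    then have "Suc n = b (Suc t)" using t by simp
    then show ?thesis using inc[rule_format, of "Suc t"] by (intro exI[of _ "Suc t"]) auto
  qed
qed

lemma mpv_seg: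
  fixes B :: "nat \<Rightarrow> real list" and ws :: "nat \<Rightarrow> real"
  assumes ne: "\<forall>t. B t \<noteq> []" and len: "\<forall>t. length (B t) \<le> L" and bd: "\<forall>k. \<bar>ws k\<bar> \<le> W"
    and pre: "\<forall>t k. k < length (B t) \<longrightarrow> ws (length (concat (map B [0..<t])) + k) = B t ! k"
  shows "mpv ws \<longleftrightarrow> mpv (\<lambda>t. sum_list (B t))"
proof -
  define b where "b t = length (concat (map B [0..<t]))" for t
  define S where "S n = (\<Sum>k<n. ws k)" for n
  define Y where "Y N = (\<Sum>t<N. sum_list (B t))" for N
  have bS: "b (Suc t) = b t + length (B t)" for t by (simp add: b_def)
  have b0: "b 0 = 0" by (simp add: b_def)
  have "length (B 0) \<ge> 1" using ne by (simp add: Suc_le_eq)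
  then have L1: "L \<ge> 1" using len[rule_format, of 0] by linarith
  have W0: "W \<ge> 0" using bd[rule_format, of 0] by simp
  have inc: "\<forall>t. b t < b (Suc t)" using ne bS by simp
  have SY: "S (b N) = Y N" for N
  proof (induction N)
    case 0
    then show ?case by (simp add: S_def Y_def b0)
  next
    case (Suc N)
    have "S (b (Suc N)) = S (b N) + (\<Sum>k<length (B N). ws (b N + k))"
      unfolding bS S_def by (rule sum_split_add)
    also have "(\<Sum>k<length (B N). ws (b N + k)) = (\<Sum>k<length (B N). B N ! k)"
      using pre by (intro sum.cong) (auto simp: b_def)
    also have "\<dots> = sum_list (B N)" by (simp add: sum_list_sum_nth atLeast0LessThan)
    finally show ?case using Suc by (simp add: Y_def)
  qed
  have blo: "N \<le> b N" for N
  proof (induction N)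
    case (Suc N)
    then show ?case using inc[rule_format, of N] by linarith
  qed (simp add: b0)
  have bhi: "b N \<le> L * N" for N
  proof (induction N)
    case (Suc N)
    then show ?case using len[rule_format, of N] bS[of N] by simp
  qed (simp add: b0)
  show ?thesis
  proof
    assume m: "mpv ws"
    show "mpv (\<lambda>t. sum_list (B t))" unfolding mpv_iff
    proof (intro allI impI)
      fix y :: real assume y: "y < 0"
      then have "y / real L < 0" using L1 by (simp add: divide_neg_pos)
      then obtain N0 where N0: "\<forall>n\<ge>N0. (y / real L) * real n < S n" using m unfolding mpv_iff S_def by blast
      show "\<exists>N0. \<forall>N\<ge>N0. y * real N < (\<Sum>k<N. sum_list (B k))"
      proof (intro exI[of _ N0] allI impI)
        fix N assume N: "N0 \<le> N"
        then have "b N \<ge> N0" using blo le_trans by blast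
        then have "(y / real L) * real (b N) < Y N" using N0 SY by metis
        moreover have "(y / real L) * real (b N) \<ge> (y / real L) * (real L * real N)"
        proof (rule mult_left_mono_neg)
          show "real (b N) \<le> real L * real N" using bhi[of N] by (metis of_nat_le_iff of_nat_mult)
          show "y / real L \<le> 0" using \<open>y / real L < 0\<close> by simp
        qed
        moreover have "(y / real L) * (real L * real N) = y * real N" using L1 by simp
        ultimately show "y * real N < (\<Sum>k<N. sum_list (B k))" by (simp add: Y_def)
      qed
    qed
  next
    assume m: "mpv (\<lambda>t. sum_list (B t))"
    show "mpv ws" unfolding mpv_iff
    proof (intro allI impI)
      fix y :: real assume y: "y < 0"
      then have "y / 2 < 0" by simp
      then obtain N0 where N0: "\<forall>N\<ge>N0. (y / 2) * real N < Y N" using m unfolding mpv_iff Y_def by blast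
      define n1 where "n1 = max (L * Suc N0) (nat \<lceil>2 * real L * W / (- y)\<rceil>)"
      show "\<exists>N0. \<forall>n\<ge>N0. y * real n < (\<Sum>k<n. ws k)"
      proof (intro exI[of _ n1] allI impI)
        fix n assume n: "n1 \<le> n"
        obtain t where t: "b t \<le> n" "n < b (Suc t)" using exists_block[OF b0 inc] by blast
        have tN0: "t \<ge> N0"
        proof (rule ccontr)
          assume "\<not> t \<ge> N0"
          then have "Suc t \<le> N0" by simp
          then have "L * Suc t \<le> L * Suc N0" by simp
          then have "b (Suc t) \<le> L * Suc N0" using bhi[of "Suc t"] by linarith
          then show False using t n n1_def by linarith
        qed
        have Yt: "(y / 2) * real t < Y t" using N0 tN0 by blast
        have "n - b t < length (B t)" using t bS by simp
        then have "n - b t \<le> L" using len by (meson le_trans less_imp_le_nat)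
        have Sn: "S n = Y t + (\<Sum>k<n - b t. ws (b t + k))"
          using sum_split_add[of ws "b t" "n - b t"] t SY by (simp add: S_def)
        have "\<bar>(\<Sum>k<n - b t. ws (b t + k))\<bar> \<le> real (n - b t) * W"
          using bd by (intro sum_abs_le) auto
        also have "\<dots> \<le> real L * W" using \<open>n - b t \<le> L\<close> W0 by (intro mult_right_mono) auto
        finally have Sn2: "S n \<ge> Y t - real L * W" using Sn by linarith
        have "real t \<le> real n" using blo[of t] t by simp
        then have "(y / 2) * real t \<ge> (y / 2) * real n" using y by (intro mult_left_mono_neg) auto
        have "real n \<ge> 2 * real L * W / (- y)" using n n1_def by linarith
        then have "(- y / 2) * real n \<ge> (- y / 2) * (2 * real L * W / (- y))"
          using y by (intro mult_left_mono) auto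
        also have "(- y / 2) * (2 * real L * W / (- y)) = real L * W" using y by (simp add: field_simps)
        finally have c: "(- y / 2) * real n \<ge> real L * W" .
        have "S n > (y / 2) * real n - real L * W"
          using Sn2 Yt \<open>(y / 2) * real t \<ge> (y / 2) * real n\<close> by linarith
        then show "y * real n < (\<Sum>k<n. ws k)" using c by (simp add: S_def algebra_simps)
      qed
    qed
  qed
qed


fun outcome :: "run \<Rightarrow> tval" where
  "outcome (RFin ps (FEx j)) = (if ps = [] then Idx j else Wgt (sum_list ps) j)"
| "outcome (RFin ps (FStar v)) = v"
| "outcome (RInf ws) = (if mpv ws then EStar else AStar)"

lemma Wsem_outcome: "Wsem G i = outcome (runOf G (En i))"
proof (cases "\<exists>k. walk G (En i) (Suc k) = None")
  case True
  define M where "M = (LEAST k. walk G (En i) (Suc k) = None)"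
  define x where "x = the (walk G (En i) M)"
  have W: "Wsem G i = (case x of
              Ex j \<Rightarrow> (if M = 1 then Idx j
                        else Wgt (\<Sum>k\<in>{1..M - 1}. nodew G (the (walk G (En i) k))) j)
            | Po q \<Rightarrow> (if role G q = PForall then EStar else AStar)
            | En _ \<Rightarrow> EStar)"
    unfolding Wsem_def gpath_walk Let_def M_def[symmetric] x_def[symmetric] using True by simp
  have R: "runOf G (En i) = RFin (map (\<lambda>k. nodew G (the (walk G (En i) k))) [1..<(if isEx x then M else Suc M)]) (dterm G x)"
    unfolding runOf_def using True by (simp add: Let_def M_def x_def)
  show ?thesis
  proof (cases x)
    case (En e)
    then show ?thesis using W R by (simp add: dterm_def)
  next
    case (Po q)
    then show ?thesis using W R by (simp add: dterm_def)
  next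
    case (Ex j)
    have "M \<noteq> 0" using Ex by (auto simp: x_def intro: ccontr)
    then have s: "(\<Sum>k\<in>{1..M - 1}. nodew G (the (walk G (En i) k))) = sum_list (map (\<lambda>k. nodew G (the (walk G (En i) k))) [1..<M])"
      by (simp add: sum_set_upt_conv_sum_list_nat[symmetric] atLeastLessThanSuc_atLeastAtMost[symmetric])
    show ?thesis using W R Ex \<open>M \<noteq> 0\<close> s by (simp add: dterm_def)
  qed
next
  case False
  have W: "Wsem G i = (if Liminf sequentially
             (\<lambda>N. ereal ((\<Sum>k\<in>{1..N}. nodew G (the (walk G (En i) k))) / real N)) \<ge> 0
        then EStar else AStar)"
    unfolding Wsem_def gpath_walk using False by (simp del: not_None_eq)
  have R: "runOf G (En i) = RInf (\<lambda>k. nodew G (the (walk G (En i) (Suc k))))"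
    unfolding runOf_def using False by (simp del: not_None_eq)
  have "(\<Sum>k\<in>{1..N}. nodew G (the (walk G (En i) k))) = (\<Sum>k<N. nodew G (the (walk G (En i) (Suc k))))" for N
    using sum.atLeast1_atMost_eq[of "\<lambda>k. nodew G (the (walk G (En i) k))" N] by simp
  then show ?thesis using W R by (simp add: mpv_def)
qed

definition det :: "'q game \<Rightarrow> bool" where
  "det G \<longleftrightarrow> (\<forall>s t t'. (s,t) \<in> edges G \<longrightarrow> (s,t') \<in> edges G \<longrightarrow> t = t')"

definition wfg :: "'q game \<Rightarrow> bool" where
  "wfg G \<longleftrightarrow> finite (pos G) \<and> edges G \<subseteq> srcs G \<times> tgts G"

lemma roMPG_wfg: "is_roMPG G \<Longrightarrow> wfg G"
  by (simp add: is_roMPG_def wfg_def)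

lemma roPG_det: "is_roPG G \<Longrightarrow> det G"
  unfolding is_roPG_def is_roMPG_def det_def by blast

lemma roPG_wfg: "is_roPG G \<Longrightarrow> wfg G"
  unfolding is_roPG_def by (simp add: roMPG_wfg)

lemma nxt_eq: "(s,t) \<in> edges G \<Longrightarrow> det G \<Longrightarrow> nxt G s = Some t"
  unfolding nxt_def det_def by (auto intro!: the_equality)

lemma nxt_None: "(\<And>t. (s,t) \<notin> edges G) \<Longrightarrow> nxt G s = None"
  unfolding nxt_def by auto

lemma nxt_edge: "det G \<Longrightarrow> nxt G s = Some t \<Longrightarrow> (s,t) \<in> edges G"
  unfolding nxt_def det_def by (auto split: if_splits intro: theI)

lemma nxt_None_iff: "nxt G s = None \<longleftrightarrow> (\<forall>t. (s,t) \<notin> edges G)"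
  unfolding nxt_def by auto

lemma wfg_edge: "wfg G \<Longrightarrow> (s,t) \<in> edges G \<Longrightarrow> s \<in> srcs G \<and> t \<in> tgts G"
  unfolding wfg_def by auto

lemma wfg_nxt_tgt: "wfg G \<Longrightarrow> det G \<Longrightarrow> nxt G s = Some t \<Longrightarrow> t \<in> tgts G"
  using nxt_edge wfg_edge by blast

lemma wfg_nxt_Ex: "wfg G \<Longrightarrow> nxt G (Ex j) = None"
  unfolding nxt_None_iff wfg_def srcs_def by auto

lemma wfg_nxt_src: "wfg G \<Longrightarrow> det G \<Longrightarrow> nxt G s = Some t \<Longrightarrow> s \<in> srcs G"
  using nxt_edge wfg_edge by blast

lemma tgts_cases: "t \<in> tgts G \<Longrightarrow> (\<exists>j\<in>{1..ext G}. t = Ex j) \<or> (\<exists>q\<in>pos G. t = Po q)"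
  unfolding tgts_def by auto

lemma roMPG_En_nxt: "is_roMPG G \<Longrightarrow> i \<in> {1..ent G} \<Longrightarrow> nxt G (En i) \<noteq> None"
  unfolding is_roMPG_def nxt_None_iff by blast

lemma runOf_tm: "runOf G s = RFin ps tm \<Longrightarrow> (\<exists>j. tm = FEx j) \<or> tm = FStar EStar \<or> tm = FStar AStar"
  unfolding runOf_def dterm_def by (auto simp: Let_def split: if_splits node.splits)

fun maptm :: "(nat \<Rightarrow> nat) \<Rightarrow> fterm \<Rightarrow> fterm" where
  "maptm f (FEx j) = FEx (f j)" | "maptm f (FStar v) = FStar v"

fun maprun :: "(nat \<Rightarrow> nat) \<Rightarrow> run \<Rightarrow> run" where
  "maprun f (RFin ps tm) = RFin ps (maptm f tm)" | "maprun f (RInf ws) = RInf ws"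

lemma maprun_pcons: "maprun f (pcons w r) = pcons w (maprun f r)"
  by (cases r) auto

lemma maprun_id: "maprun id r = r"
proof (cases r)
  case (RFin ps tm) then show ?thesis by (cases tm) auto
qed auto

lemma transport:
  assumes wf1: "wfg G1" and det1: "det G1"
    and nx: "nxt G2 x = map_option h (nxt G1 s)"
    and hEx: "\<forall>j. h (Ex j) = Ex (\<phi> j)"
    and hPo: "\<forall>q. nxt G1 s = Some (Po q) \<longrightarrow> \<not> isEx (h (Po q)) \<and> nodew G2 (h (Po q)) = wt G1 q
               \<and> F (h (Po q)) = maprun \<phi> (runOf G1 (Po q))"
    and exN: "\<forall>j. nxt G2 (Ex j) = None"
    and dt: "nxt G1 s = None \<Longrightarrow> dterm G2 x = maptm \<phi> (dterm G1 s)"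
  shows "stepf G2 F x = maprun \<phi> (runOf G1 s)"
proof (cases "nxt G1 s")
  case None
  then show ?thesis using nx dt runOf_unf[of G1 s] by (simp add: stepf_def)
next
  case (Some t)
  then have "t \<in> tgts G1" using wf1 det1 wfg_nxt_tgt by blast
  then consider (E) j where "t = Ex j" | (P) q where "t = Po q" using tgts_cases by blast
  then show ?thesis
  proof cases
    case E
    have "runOf G1 s = RFin [] (FEx j)"
      using runOf_unf[of G1 s] Some E wfg_nxt_Ex[OF wf1] by (simp add: stepf_def dterm_def)
    then show ?thesis using nx Some E hEx exN by (simp add: stepf_def dterm_def)
  next
    case P
    have "runOf G1 s = pcons (wt G1 q) (runOf G1 (Po q))"
      using runOf_unf[of G1 s] Some P by (simp add: stepf_def)
    then show ?thesis using nx Some P hPo by (simp add: stepf_def maprun_pcons)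
  qed
qed


lemma nxt_via:
  assumes eq: "\<forall>t. (x,t) \<in> edges G2 \<longleftrightarrow> (\<exists>t'. t = h t' \<and> (s,t') \<in> edges G1)" and d: "det G1"
  shows "nxt G2 x = map_option h (nxt G1 s)"
proof (cases "\<exists>t'. (s,t') \<in> edges G1")
  case True
  then obtain t' where t': "(s,t') \<in> edges G1" by blast
  then have n1: "nxt G1 s = Some t'" using d nxt_eq by blast
  have ht: "(x, h t') \<in> edges G2" using eq t' by blast
  have un: "u = h t'" if u: "(x,u) \<in> edges G2" for u
  proof -
    obtain t'' where "u = h t''" "(s,t'') \<in> edges G1" using eq u by blast
    moreover have "t'' = t'" using d t' calculation(2) unfolding det_def by blast
    ultimately show ?thesis by simp
  qed
  have "(THE u. (x,u) \<in> edges G2) = h t'" using ht un by (rule the_equality)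
  then have "nxt G2 x = Some (h t')" unfolding nxt_def using ht by auto
  then show ?thesis using n1 by simp
next
  case False
  then have "nxt G1 s = None" unfolding nxt_None_iff by blast
  moreover have "nxt G2 x = None" using False eq unfolding nxt_None_iff by blast
  ultimately show ?thesis by simp
qed

lemma map_node_Inl_inj: "map_node Inl s = map_node Inl s' \<longleftrightarrow> s = s'"
  by (cases s; cases s') auto

lemma map_node_Inr_inj: "map_node Inr s = map_node Inr s' \<longleftrightarrow> s = s'"
  by (cases s; cases s') auto

lemma shift_node_inj: "shift_node a b s = shift_node a b s' \<longleftrightarrow> s = s'"
  by (cases s; cases s') auto

lemma srcs_cases: "s \<in> srcs G \<Longrightarrow> (\<exists>i\<in>{1..ent G}. s = En i) \<or> (\<exists>q\<in>pos G. s = Po q)"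
  unfolding srcs_def by auto

lemma outcome_maprun_shift:
  assumes "\<And>ps v. r = RFin ps (FStar v) \<Longrightarrow> v = EStar \<or> v = AStar"
  shows "outcome (maprun ((+) n) r) = tshift n (outcome r)"
proof (cases r)
  case (RFin ps tm)
  then show ?thesis using assms by (cases tm) auto
qed simp

context
  fixes C :: "'a game" and D :: "'b game"
  assumes wC: "wfg C" and wD: "wfg D" and dC: "det C" and dD: "det D"
begin

lemma gpar_simps: "ent (gpar C D) = ent C + ent D" "ext (gpar C D) = ext C + ext D"
  "role (gpar C D) = case_sum (role C) (role D)" "wt (gpar C D) = case_sum (wt C) (wt D)"
  "pos (gpar C D) = Inl ` pos C \<union> Inr ` pos D"
  by (simp_all add: gpar_def)

lemma gpar_edge_iff: "(x,t) \<in> edges (gpar C D) \<longleftrightarrow>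
   (\<exists>s t'. x = map_node Inl s \<and> t = map_node Inl t' \<and> (s,t') \<in> edges C) \<or>
   (\<exists>s t'. x = shift_node (ent C) (ext C) s \<and> t = shift_node (ent C) (ext C) t' \<and> (s,t') \<in> edges D)"
  unfolding gpar_def by auto

lemma gpar_succ_C:
  assumes "(\<exists>i. s = En i \<and> i \<le> ent C) \<or> (\<exists>q. s = Po q)"
  shows "(map_node Inl s, t) \<in> edges (gpar C D) \<longleftrightarrow> (\<exists>t'. t = map_node Inl t' \<and> (s,t') \<in> edges C)"
proof -
  have "\<not> (s', t') \<in> edges D" if "map_node Inl s = shift_node (ent C) (ext C) s'" for s' t'
  proof
    assume e: "(s', t') \<in> edges D"
    then have "s' \<in> srcs D" using wD wfg_edge by blast
    then show False using that assms by (auto simp: srcs_def)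
  qed
  then show ?thesis unfolding gpar_edge_iff map_node_Inl_inj by blast
qed

lemma gpar_succ_D:
  assumes "(\<exists>i. s = En i \<and> 1 \<le> i) \<or> (\<exists>q. s = Po q)"
  shows "(shift_node (ent C) (ext C) s, t) \<in> edges (gpar C D) \<longleftrightarrow> (\<exists>t'. t = shift_node (ent C) (ext C) t' \<and> (s,t') \<in> edges D)"
proof -
  have "\<not> (s', t') \<in> edges C" if "shift_node (ent C) (ext C) s = map_node Inl s'" for s' t'
  proof
    assume e: "(s', t') \<in> edges C"
    then have "s' \<in> srcs C" using wC wfg_edge by blast
    then show False using that assms by (auto simp: srcs_def)
  qed
  then show ?thesis unfolding gpar_edge_iff shift_node_inj by blast
qed

lemma gpar_nxt_Ex: "nxt (gpar C D) (Ex j) = None"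
proof -
  have c1: "Ex j \<noteq> map_node Inl s" if "(s,t') \<in> edges C" for s t'
    using that wfg_edge[OF wC] by (cases s) (auto simp: srcs_def)
  have c2: "Ex j \<noteq> shift_node (ent C) (ext C) s" if "(s,t') \<in> edges D" for s t'
    using that wfg_edge[OF wD] by (cases s) (auto simp: srcs_def)
  show ?thesis unfolding nxt_None_iff gpar_edge_iff using c1 c2 by blast
qed

lemma gpar_no_En: "(x, En e) \<notin> edges (gpar C D)"
proof -
  have c1: "En e \<noteq> map_node Inl t'" if "(s,t') \<in> edges C" for s t'
    using that wfg_edge[OF wC] by (cases t') (auto simp: tgts_def)
  have c2: "En e \<noteq> shift_node (ent C) (ext C) t'" if "(s,t') \<in> edges D" for s t'
    using that wfg_edge[OF wD] by (cases t') (auto simp: tgts_def)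
  show ?thesis unfolding gpar_edge_iff using c1 c2 by blast
qed

lemma gpar_det: "det (gpar C D)"
  unfolding det_def
proof (intro allI impI)
  fix x t t' assume e1: "(x,t) \<in> edges (gpar C D)" and e2: "(x,t') \<in> edges (gpar C D)"
  have cross: False if "map_node Inl s1 = shift_node (ent C) (ext C) s2" "(s1,u1) \<in> edges C" "(s2,u2) \<in> edges D" for s1 s2 u1 u2
  proof -
    have "s1 \<in> srcs C" "s2 \<in> srcs D" using that wfg_edge[OF wC] wfg_edge[OF wD] by blast+
    then show False using that(1) by (cases s1; cases s2) (auto simp: srcs_def)
  qed
  from e1 consider (a) s1 u1 where "x = map_node Inl s1" "t = map_node Inl u1" "(s1,u1) \<in> edges C"
    | (b) s1 u1 where "x = shift_node (ent C) (ext C) s1" "t = shift_node (ent C) (ext C) u1" "(s1,u1) \<in> edges D"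
    unfolding gpar_edge_iff by blast
  then show "t = t'"
  proof cases
    case a
    from e2 consider (a2) s2 u2 where "x = map_node Inl s2" "t' = map_node Inl u2" "(s2,u2) \<in> edges C"
      | (b2) s2 u2 where "x = shift_node (ent C) (ext C) s2" "t' = shift_node (ent C) (ext C) u2" "(s2,u2) \<in> edges D"
      unfolding gpar_edge_iff by blast
    then show ?thesis
    proof cases
      case a2
      then have "s1 = s2" using a map_node_Inl_inj by metis
      then show ?thesis using a a2 dC unfolding det_def by metis
    next
      case b2
      then show ?thesis using a cross by metis
    qed
  next
    case b
    from e2 consider (a2) s2 u2 where "x = map_node Inl s2" "t' = map_node Inl u2" "(s2,u2) \<in> edges C"
      | (b2) s2 u2 where "x = shift_node (ent C) (ext C) s2" "t' = shift_node (ent C) (ext C) u2" "(s2,u2) \<in> edges D"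
      unfolding gpar_edge_iff by blast
    then show ?thesis
    proof cases
      case a2
      then show ?thesis using b cross by metis
    next
      case b2
      then have "s1 = s2" using b shift_node_inj by metis
      then show ?thesis using b b2 dD unfolding det_def by metis
    qed
  qed
qed

definition Fpar :: "('a + 'b) node \<Rightarrow> run" where
  "Fpar x = (case x of En i \<Rightarrow> (if i \<le> ent C then runOf C (En i) else maprun ((+) (ext C)) (runOf D (En (i - ent C))))
     | Po (Inl q) \<Rightarrow> runOf C (Po q)
     | Po (Inr q) \<Rightarrow> maprun ((+) (ext C)) (runOf D (Po q))
     | Ex j \<Rightarrow> RFin [] (FEx j))"

lemma Fpar_fix:
  assumes "x \<in> En ` {1..ent C + ent D} \<union> range Po \<union> range Ex"
  shows "Fpar x = stepf (gpar C D) Fpar x"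
proof -
  consider (E1) i where "x = En i" "1 \<le> i" "i \<le> ent C" | (E2) i where "x = En i" "ent C < i"
    | (P1) q where "x = Po (Inl q)" | (P2) q where "x = Po (Inr q)" | (X) j where "x = Ex j"
  proof (cases x)
    case (En i)
    then show ?thesis using assms that(1,2) by (cases "i \<le> ent C") auto
  next
    case (Po q)
    then show ?thesis using that(3,4) by (cases q) auto
  next
    case (Ex j)
    then show ?thesis using that(5) by auto
  qed
  then show ?thesis
  proof cases
    case E1
    have "stepf (gpar C D) Fpar (map_node Inl (En i)) = maprun id (runOf C (En i))"
    proof (rule transport[OF wC dC])
      show "nxt (gpar C D) (map_node Inl (En i)) = map_option (map_node Inl) (nxt C (En i))"
        using gpar_succ_C[of "En i"] E1 by (intro nxt_via[OF _ dC]) auto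
    qed (auto simp: gpar_nxt_Ex dterm_def Fpar_def maprun_id gpar_simps)
    then show ?thesis using E1 by (simp add: Fpar_def maprun_id)
  next
    case E2
    have x: "x = shift_node (ent C) (ext C) (En (i - ent C))" using E2 by simp
    have "stepf (gpar C D) Fpar (shift_node (ent C) (ext C) (En (i - ent C))) = maprun ((+) (ext C)) (runOf D (En (i - ent C)))"
    proof (rule transport[OF wD dD])
      show "nxt (gpar C D) (shift_node (ent C) (ext C) (En (i - ent C))) = map_option (shift_node (ent C) (ext C)) (nxt D (En (i - ent C)))"
        using gpar_succ_D[of "En (i - ent C)"] E2 by (intro nxt_via[OF _ dD]) auto
    qed (auto simp: gpar_nxt_Ex dterm_def Fpar_def gpar_simps)
    then show ?thesis using E2 x by (simp add: Fpar_def)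
  next
    case P1
    have "stepf (gpar C D) Fpar (map_node Inl (Po q)) = maprun id (runOf C (Po q))"
    proof (rule transport[OF wC dC])
      show "nxt (gpar C D) (map_node Inl (Po q)) = map_option (map_node Inl) (nxt C (Po q))"
        using gpar_succ_C[of "Po q"] by (intro nxt_via[OF _ dC]) auto
    qed (auto simp: gpar_nxt_Ex dterm_def Fpar_def maprun_id gpar_simps)
    then show ?thesis using P1 by (simp add: Fpar_def maprun_id)
  next
    case P2
    have "stepf (gpar C D) Fpar (shift_node (ent C) (ext C) (Po q)) = maprun ((+) (ext C)) (runOf D (Po q))"
    proof (rule transport[OF wD dD])
      show "nxt (gpar C D) (shift_node (ent C) (ext C) (Po q)) = map_option (shift_node (ent C) (ext C)) (nxt D (Po q))"
        using gpar_succ_D[of "Po q"] by (intro nxt_via[OF _ dD]) auto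
    qed (auto simp: gpar_nxt_Ex dterm_def Fpar_def gpar_simps)
    then show ?thesis using P2 by (simp add: Fpar_def)
  next
    case X
    then show ?thesis by (simp add: stepf_def gpar_nxt_Ex Fpar_def dterm_def)
  qed
qed

lemma gpar_runOf:
  assumes "i \<in> {1..ent C + ent D}"
  shows "runOf (gpar C D) (En i) = Fpar (En i)"
proof -
  let ?A = "En ` {1..ent C + ent D} \<union> range Po \<union> range Ex"
  have "Fpar (En i) = runOf (gpar C D) (En i)"
  proof (rule uniq_runOf[where A = ?A])
    show "\<forall>s\<in>?A. Fpar s = stepf (gpar C D) Fpar s" using Fpar_fix by blast
    show "\<forall>s\<in>?A. \<forall>t. nxt (gpar C D) s = Some t \<longrightarrow> \<not> (isEx t \<and> nxt (gpar C D) t = None) \<longrightarrow> t \<in> ?A"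
    proof (intro ballI allI impI)
      fix s t assume "nxt (gpar C D) s = Some t"
      then have "(s,t) \<in> edges (gpar C D)" using gpar_det nxt_edge by blast
      then have "t \<noteq> En e" for e using gpar_no_En by blast
      then show "t \<in> ?A" by (cases t) auto
    qed
  qed (use assms in auto)
  then show ?thesis by simp
qed

end


lemma part2:
  assumes C: "is_roPG C" and D: "is_roPG D" and i: "i \<in> {1..ent C + ent D}"
  shows "Wsem (gpar C D) i = spar (ent C) (ext C) (Wsem C) (Wsem D) i"
proof -
  note w = roPG_wfg[OF C] roPG_wfg[OF D] roPG_det[OF C] roPG_det[OF D]
  have "Wsem (gpar C D) i = outcome (Fpar C D (En i))"
    using Wsem_outcome gpar_runOf[OF w i] by metis
  then show ?thesis
    by (auto simp: Fpar_def[OF w] spar_def Wsem_outcome intro!: outcome_maprun_shift dest: runOf_tm)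
qed

lemma walk_tgts: "wfg G \<Longrightarrow> det G \<Longrightarrow> walk G s (Suc k) = Some y \<Longrightarrow> y \<in> tgts G"
  by (auto simp: walk.simps(2) split: option.splits intro: wfg_nxt_tgt)

lemma runOf_bnd:
  assumes w: "wfg G" and d: "det G" and r: "runOf G s = RInf ws"
  shows "bnd ws"
proof -
  have nf: "\<not> (\<exists>k. walk G s (Suc k) = None)"
  proof
    assume h: "\<exists>k. walk G s (Suc k) = None"
    then have "\<exists>ps tm. runOf G s = RFin ps tm" unfolding runOf_def by (simp add: Let_def)
    then show False using r by simp
  qed
  have ws: "ws = (\<lambda>k. nodew G (the (walk G s (Suc k))))"
    using r nf unfolding runOf_def by (simp del: not_None_eq)
  define W where "W = (\<Sum>q\<in>pos G. \<bar>wt G q\<bar>)"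
  have fin: "finite (pos G)" using w by (simp add: wfg_def)
  have "\<bar>ws k\<bar> \<le> W" for k
  proof -
    have "walk G s (Suc k) \<noteq> None"
    proof
      assume "walk G s (Suc k) = None"
      then show False using nf by blast
    qed
    then obtain y where y: "walk G s (Suc k) = Some y" by (cases "walk G s (Suc k)") simp_all
    then have "y \<in> tgts G" using walk_tgts[OF w d] by blast
    then consider (E) j where "y = Ex j" | (P) q where "q \<in> pos G" "y = Po q" using tgts_cases by blast
    then show ?thesis
    proof cases
      case E
      then show ?thesis using y ws W_def by (simp add: sum_nonneg)
    next
      case P
      have "\<bar>wt G q\<bar> \<le> W" unfolding W_def using P fin by (intro member_le_sum) auto
      then show ?thesis using y ws P by simp
    qed
  qed
  then show ?thesis unfolding bnd_def by blast
qed

fun papp :: "real list \<Rightarrow> run \<Rightarrow> run" where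
  "papp [] r = r" | "papp (p # ps) r = pcons p (papp ps r)"

lemma papp_Fin: "papp ps (RFin qs tm) = RFin (ps @ qs) tm"
  by (induction ps) auto

lemma papp_Inf: "papp ps (RInf ws) = RInf (shl ps ws)"
  by (induction ps) (auto simp: shl_Cons)

lemma papp_append: "papp (ps @ qs) r = papp ps (papp qs r)"
  by (induction ps) auto

context
  fixes C :: "'a game" and D :: "'b game"
  assumes wC: "wfg C" and wD: "wfg D" and dC: "det C" and dD: "det D" and eCD: "ext C = ent D"
    and Dent: "\<forall>k\<in>{1..ent D}. nxt D (En k) \<noteq> None"
begin

definition glue :: "run \<Rightarrow> run" where
  "glue r = (case r of RFin ps (FEx k) \<Rightarrow> papp ps (runOf D (En k)) | _ \<Rightarrow> r)"

lemma glue_pcons: "glue (pcons w r) = pcons w (glue r)"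
  unfolding glue_def by (cases r) (auto split: fterm.splits)

lemma gseq_simps: "ent (gseq C D) = ent C" "ext (gseq C D) = ext D"
  "role (gseq C D) = case_sum (role C) (role D)" "wt (gseq C D) = case_sum (wt C) (wt D)"
  "pos (gseq C D) = Inl ` pos C \<union> Inr ` pos D"
  by (simp_all add: gseq_def)

lemma gseq_edge_iff: "(x,t) \<in> edges (gseq C D) \<longleftrightarrow>
   (\<exists>s q. x = map_node Inl s \<and> t = Po (Inl q) \<and> (s, Po q) \<in> edges C) \<or>
   (\<exists>q t'. x = Po (Inr q) \<and> t = map_node Inr t' \<and> (Po q, t') \<in> edges D) \<or>
   (\<exists>s t'. x = map_node Inl s \<and> t = map_node Inr t' \<and> (\<exists>i\<in>{1..ext C}. (s, Ex i) \<in> edges C \<and> (En i, t') \<in> edges D))"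
  unfolding gseq_def by auto

lemma Inl_ne_Inr: "map_node Inl s \<noteq> Po (Inr q)"
  by (cases s) auto

lemma gseq_S1:
  assumes "\<not> (\<exists>k. nxt C s = Some (Ex k))"
  shows "nxt (gseq C D) (map_node Inl s) = map_option (map_node Inl) (nxt C s)"
proof (rule nxt_via[OF _ dC], intro allI)
  fix t
  have noEx: "(s, Ex i) \<notin> edges C" for i
    using assms nxt_eq[OF _ dC] by blast
  have po: "(s,t') \<in> edges C \<Longrightarrow> \<exists>q. t' = Po q" for t'
    using noEx wfg_edge[OF wC] by (cases t') (auto simp: tgts_def)
  show "(map_node Inl s, t) \<in> edges (gseq C D) \<longleftrightarrow> (\<exists>t'. t = map_node Inl t' \<and> (s, t') \<in> edges C)"
  proof
    assume "(map_node Inl s, t) \<in> edges (gseq C D)"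
    then consider (a) q where "t = Po (Inl q)" "(s, Po q) \<in> edges C" | (b) q where "map_node Inl s = Po (Inr (q::'b))"
      | (c) i where "(s, Ex i) \<in> edges C"
      unfolding gseq_edge_iff map_node_Inl_inj by (elim disjE exE conjE bexE) blast+
    then show "\<exists>t'. t = map_node Inl t' \<and> (s, t') \<in> edges C"
    proof cases
      case a then show ?thesis by (intro exI[of _ "Po q"]) simp
    next
      case b then show ?thesis by (cases s) auto
    next
      case c then show ?thesis using noEx by blast
    qed
  next
    assume "\<exists>t'. t = map_node Inl t' \<and> (s, t') \<in> edges C"
    then obtain t' where "t = map_node Inl t'" "(s, t') \<in> edges C" by blast
    moreover obtain q where "t' = Po q" using po calculation(2) by blast
    ultimately have "t = Po (Inl q)" "(s, Po q) \<in> edges C" by simp_all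
    then show "(map_node Inl s, t) \<in> edges (gseq C D)" unfolding gseq_edge_iff by blast
  qed
qed

lemma gseq_S2:
  assumes "nxt C s = Some (Ex k)"
  shows "nxt (gseq C D) (map_node Inl s) = map_option (map_node Inr) (nxt D (En k))"
proof (rule nxt_via[OF _ dD], intro allI)
  fix t
  have e: "(s, Ex k) \<in> edges C" using nxt_edge[OF dC assms] .
  then have "Ex k \<in> tgts C" using wfg_edge[OF wC] by blast
  then have k: "k \<in> {1..ext C}" by (simp add: tgts_def image_iff)
  have noPo: "(s, Po q) \<notin> edges C" for q using e dC unfolding det_def by blast
  have ui: "(s, Ex i) \<in> edges C \<Longrightarrow> i = k" for i using e dC unfolding det_def by blast
  show "(map_node Inl s, t) \<in> edges (gseq C D) \<longleftrightarrow> (\<exists>t'. t = map_node Inr t' \<and> (En k, t') \<in> edges D)"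
  proof
    assume "(map_node Inl s, t) \<in> edges (gseq C D)"
    then consider (a) q where "(s, Po q) \<in> edges C" | (b) q where "map_node Inl s = Po (Inr (q::'b))"
      | (c) i t' where "t = map_node Inr t'" "(s, Ex i) \<in> edges C" "(En i, t') \<in> edges D"
      unfolding gseq_edge_iff map_node_Inl_inj by (elim disjE exE conjE bexE) blast+
    then show "\<exists>t'. t = map_node Inr t' \<and> (En k, t') \<in> edges D"
    proof cases
      case a then show ?thesis using noPo by blast
    next
      case b then show ?thesis by (cases s) auto
    next
      case c
      then have "i = k" using ui by blast
      then show ?thesis using c by blast
    qed
  next
    assume "\<exists>t'. t = map_node Inr t' \<and> (En k, t') \<in> edges D"
    then obtain t' where "t = map_node Inr t'" "(En k, t') \<in> edges D" by blast
    then show "(map_node Inl s, t) \<in> edges (gseq C D)" unfolding gseq_edge_iff using k e by blast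
  qed
qed

lemma gseq_S3: "nxt (gseq C D) (Po (Inr q)) = map_option (map_node Inr) (nxt D (Po q))"
proof (rule nxt_via[OF _ dD], intro allI)
  fix t
  have ne: "Po (Inr q) \<noteq> map_node Inl s" for s by (cases s) auto
  show "(Po (Inr q), t) \<in> edges (gseq C D) \<longleftrightarrow> (\<exists>t'. t = map_node Inr t' \<and> (Po q, t') \<in> edges D)"
    unfolding gseq_edge_iff using ne by blast
qed

lemma gseq_S4: "nxt (gseq C D) (Ex j) = None"
proof -
  have c1: "Ex j \<noteq> map_node Inl s" if "(s,t') \<in> edges C" for s t'
    using that wfg_edge[OF wC] by (cases s) (auto simp: srcs_def)
  have "(Ex j, t) \<notin> edges (gseq C D)" for t
  proof
    assume "(Ex j, t) \<in> edges (gseq C D)"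
    then consider (a) s q where "(Ex j :: ('a + 'b) node) = map_node Inl s" "(s, Po q) \<in> edges C" | (b) q where "(Ex j :: ('a + 'b) node) = Po (Inr q)"
      | (c) s i where "(Ex j :: ('a + 'b) node) = map_node Inl s" "(s, Ex i) \<in> edges C"
      unfolding gseq_edge_iff by blast
    then show False
    proof cases
      case a then show ?thesis using c1 by blast
    next
      case b then show ?thesis by simp
    next
      case c then show ?thesis using c1 by blast
    qed
  qed
  then show ?thesis by (simp add: nxt_None)
qed

definition Fseq :: "('a + 'b) node \<Rightarrow> run" where
  "Fseq x = (case x of Po (Inr q) \<Rightarrow> runOf D (Po q)
     | Po (Inl q) \<Rightarrow> glue (runOf C (Po q))
     | En i \<Rightarrow> glue (runOf C (En i))
     | Ex j \<Rightarrow> RFin [] (FEx j))"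

lemma Fseq_fix_Inl:
  assumes s0: "\<not> isEx s0"
  shows "stepf (gseq C D) Fseq (map_node Inl s0) = glue (runOf C s0)"
proof (cases "nxt C s0")
  case None
  have n: "nxt (gseq C D) (map_node Inl s0) = None" using gseq_S1[of s0] None by simp
  have d: "dterm (gseq C D) (map_node Inl s0) = dterm C s0"
    using s0 by (cases s0) (simp_all add: dterm_def gseq_simps)
  have r: "runOf C s0 = RFin [] (dterm C s0)" using runOf_unf[of C s0] None by (simp add: stepf_def)
  have g: "glue (RFin [] (dterm C s0)) = RFin [] (dterm C s0)"
    using s0 by (cases s0) (simp_all add: dterm_def glue_def)
  show ?thesis using n d r g by (simp add: stepf_def)
next
  case (Some t)
  then have "t \<in> tgts C" using wfg_nxt_tgt[OF wC dC] by blast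
  then consider (E) k where "t = Ex k" "k \<in> {1..ext C}" | (P) q where "t = Po q" using tgts_cases by blast
  then show ?thesis
  proof cases
    case E
    have rC: "runOf C s0 = RFin [] (FEx k)"
      using runOf_unf[of C s0] Some E wfg_nxt_Ex[OF wC] by (simp add: stepf_def dterm_def)
    have kk: "k \<in> {1..ent D}" using E eCD by simp
    have kD: "nxt D (En k) \<noteq> None" using Dent kk by (rule bspec)
    have "stepf (gseq C D) Fseq (map_node Inl s0) = maprun id (runOf D (En k))"
    proof (rule transport[OF wD dD])
      show "nxt (gseq C D) (map_node Inl s0) = map_option (map_node Inr) (nxt D (En k))"
        using gseq_S2 Some E by blast
      show "nxt D (En k) = None \<Longrightarrow> dterm (gseq C D) (map_node Inl s0) = maptm id (dterm D (En k))"
        using kD by blast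
      show "\<forall>j. map_node Inr (Ex j) = Ex (id j)" by simp
      show "\<forall>j. nxt (gseq C D) (Ex j) = None" by (simp add: gseq_S4)
      show "\<forall>q. nxt D (En k) = Some (Po q) \<longrightarrow> \<not> isEx (map_node Inr (Po q)) \<and> nodew (gseq C D) (map_node Inr (Po q)) = wt D q
               \<and> Fseq (map_node Inr (Po q)) = maprun id (runOf D (Po q))"
        by (simp add: Fseq_def gseq_simps maprun_id)
    qed
    then show ?thesis using rC by (simp add: glue_def maprun_id)
  next
    case P
    have rC: "runOf C s0 = pcons (wt C q) (runOf C (Po q))"
      using runOf_unf[of C s0] Some P by (simp add: stepf_def)
    have "nxt (gseq C D) (map_node Inl s0) = Some (Po (Inl q))" using gseq_S1[of s0] Some P by simp
    then show ?thesis using rC by (simp add: stepf_def Fseq_def gseq_simps glue_pcons)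
  qed
qed

lemma Fseq_fix: "Fseq x = stepf (gseq C D) Fseq x"
proof (cases x)
  case (En i)
  then show ?thesis using Fseq_fix_Inl[of "En i"] by (simp add: Fseq_def)
next
  case (Ex j)
  then show ?thesis by (simp add: stepf_def gseq_S4 Fseq_def dterm_def)
next
  case (Po q)
  show ?thesis
  proof (cases q)
    case (Inl q')
    then show ?thesis using Po Fseq_fix_Inl[of "Po q'"] by (simp add: Fseq_def)
  next
    case (Inr q')
    have "stepf (gseq C D) Fseq (map_node Inr (Po q')) = maprun id (runOf D (Po q'))"
    proof (rule transport[OF wD dD])
      show "nxt (gseq C D) (map_node Inr (Po q')) = map_option (map_node Inr) (nxt D (Po q'))"
        using gseq_S3 by simp
    qed (auto simp: gseq_S4 Fseq_def gseq_simps maprun_id dterm_def)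
    then show ?thesis using Po Inr by (simp add: Fseq_def maprun_id)
  qed
qed

lemma gseq_runOf: "runOf (gseq C D) x = Fseq x"
  using uniq_runOf[of UNIV Fseq "gseq C D" x] Fseq_fix by auto

lemma outcome_glue:
  assumes "\<And>ps v. r = RFin ps (FStar v) \<Longrightarrow> v = EStar \<or> v = AStar"
  shows "outcome (glue r) = (case outcome r of EStar \<Rightarrow> EStar | AStar \<Rightarrow> AStar
    | Idx j \<Rightarrow> outcome (runOf D (En j))
    | Wgt w j \<Rightarrow> (case outcome (runOf D (En j)) of EStar \<Rightarrow> EStar | AStar \<Rightarrow> AStar
                  | Idx k \<Rightarrow> Wgt w k | Wgt r' k \<Rightarrow> Wgt (w + r') k))"
proof (cases r)
  case (RFin ps tm)
  show ?thesis
  proof (cases tm)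
    case (FEx k)
    show ?thesis
    proof (cases "ps = []")
      case True
      then show ?thesis using RFin FEx by (simp add: glue_def)
    next
      case False
      show ?thesis
      proof (cases "runOf D (En k)")
        case (RFin qs tm')
        then show ?thesis using \<open>r = _\<close> FEx False runOf_tm[OF RFin]
          by (cases tm') (auto simp: glue_def papp_Fin)
      next
        case (RInf ws)
        have "bnd ws" using runOf_bnd[OF wD dD RInf] .
        then show ?thesis using \<open>r = _\<close> FEx False RInf
          by (simp add: glue_def papp_Inf mpv_shl)
      qed
    qed
  next
    case (FStar v)
    then show ?thesis using RFin assms by (auto simp: glue_def)
  qed
next
  case (RInf ws)
  then show ?thesis by (simp add: glue_def)
qed

end

lemma part1:
  assumes C: "is_roPG C" and D: "is_roPG D" and e: "ext C = ent D" and i: "i \<in> {1..ent C}"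
  shows "Wsem (gseq C D) i = semcomp (Wsem C) (Wsem D) i"
proof -
  note w = roPG_wfg[OF C] roPG_wfg[OF D] roPG_det[OF C] roPG_det[OF D] e
  have De: "\<forall>k\<in>{1..ent D}. nxt D (En k) \<noteq> None"
    using D roMPG_En_nxt unfolding is_roPG_def by blast
  have star: "\<And>ps v. runOf C (En i) = RFin ps (FStar v) \<Longrightarrow> v = EStar \<or> v = AStar"
    using runOf_tm by fastforce
  have "Wsem (gseq C D) i = outcome (glue D (runOf C (En i)))"
    using Wsem_outcome gseq_runOf[OF w De] by (metis Fseq_def[OF w De] node.simps(10))
  also have "\<dots> = semcomp (Wsem C) (Wsem D) i"
    unfolding semcomp_def Wsem_outcome by (rule outcome_glue[OF w De star])
  finally show ?thesis .
qed


lemma walk_add: "walk G s (a + d) = (case walk G s a of None \<Rightarrow> None | Some y \<Rightarrow> walk G y d)"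
proof (induction d)
  case 0
  then show ?case by (cases "walk G s a") auto
next
  case (Suc d)
  then show ?case by (cases "walk G s a") (simp_all add: walk.simps(2))
qed

lemma runOf_exit_pred:
  assumes w: "wfg G" and d: "det G"
  shows "runOf G s = RFin ps (FEx x) \<Longrightarrow> \<not> isEx s \<Longrightarrow>
    \<exists>p. (p, Ex x) \<in> edges G \<and> (ps = [] \<longrightarrow> p = s) \<and> (ps \<noteq> [] \<longrightarrow> (\<exists>q. p = Po q))"
proof (induction ps arbitrary: s)
  case Nil
  show ?case
  proof (cases "nxt G s")
    case None
    then have "runOf G s = RFin [] (dterm G s)" using runOf_unf[of G s] by (simp add: stepf_def)
    then show ?thesis using Nil by (cases s) (auto simp: dterm_def)
  next
    case (Some t)
    then have "t \<in> tgts G" using wfg_nxt_tgt[OF w d] by blast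
    then consider (E) j where "t = Ex j" | (P) q where "t = Po q" using tgts_cases by blast
    then show ?thesis
    proof cases
      case E
      then have "runOf G s = RFin [] (FEx j)" using runOf_unf[of G s] Some wfg_nxt_Ex[OF w] by (simp add: stepf_def dterm_def)
      then have "j = x" using Nil by simp
      then show ?thesis using nxt_edge[OF d Some] E by auto
    next
      case P
      then have "runOf G s = pcons (wt G q) (runOf G (Po q))" using runOf_unf[of G s] Some by (simp add: stepf_def)
      then show ?thesis using Nil by (cases "runOf G (Po q)") auto
    qed
  qed
next
  case (Cons p ps)
  show ?case
  proof (cases "nxt G s")
    case None
    then have "runOf G s = RFin [] (dterm G s)" using runOf_unf[of G s] by (simp add: stepf_def)
    then show ?thesis using Cons by simp
  next
    case (Some t)
    then have "t \<in> tgts G" using wfg_nxt_tgt[OF w d] by blast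
    then consider (E) j where "t = Ex j" | (P) q where "t = Po q" using tgts_cases by blast
    then show ?thesis
    proof cases
      case E
      then have "runOf G s = RFin [] (FEx j)" using runOf_unf[of G s] Some wfg_nxt_Ex[OF w] by (simp add: stepf_def dterm_def)
      then show ?thesis using Cons by simp
    next
      case P
      then have r: "runOf G s = pcons (wt G q) (runOf G (Po q))" using runOf_unf[of G s] Some by (simp add: stepf_def)
      then have rq: "runOf G (Po q) = RFin ps (FEx x)" using Cons.prems by (cases "runOf G (Po q)") auto
      obtain p' where p': "(p', Ex x) \<in> edges G" "ps = [] \<longrightarrow> p' = Po q" "ps \<noteq> [] \<longrightarrow> (\<exists>q. p' = Po q)"
        using Cons.IH[OF rq] by auto
      then show ?thesis by (cases "ps = []") auto
    qed
  qed
qed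

lemma runOf_len:
  assumes w: "wfg G" and d: "det G" and r: "runOf G s = RFin ps (FEx x)"
  shows "length ps \<le> card (pos G)"
proof -
  have ex: "\<exists>k. walk G s (Suc k) = None"
  proof (rule ccontr)
    assume "\<not> ?thesis"
    then have "runOf G s = RInf (\<lambda>k. nodew G (the (walk G s (Suc k))))" unfolding runOf_def by (simp del: not_None_eq)
    then show False using r by simp
  qed
  define M where "M = (LEAST k. walk G s (Suc k) = None)"
  define x0 where "x0 = the (walk G s M)"
  have r2: "runOf G s = RFin (map (\<lambda>k. nodew G (the (walk G s k))) [1..<(if isEx x0 then M else Suc M)]) (dterm G x0)"
    unfolding runOf_def using ex by (simp add: Let_def M_def[symmetric] x0_def[symmetric])
  have "isEx x0" using r r2 by (cases x0) (auto simp: dterm_def)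
  then have "ps = map (\<lambda>k. nodew G (the (walk G s k))) [1..<M]" using r r2 by simp
  then have lps: "length ps = M - 1" by simp
  have sucM: "walk G s (Suc M) = None" using LeastI_ex[OF ex] unfolding M_def .
  have nn: "walk G s k \<noteq> None" if "k \<le> M" for k
  proof (cases k)
    case 0 then show ?thesis by simp
  next
    case (Suc k')
    then have "k' < M" using that by simp
    then show ?thesis using not_less_Least[of k' "\<lambda>k. walk G s (Suc k) = None"] Suc M_def by blast
  qed
  have inPo: "the (walk G s k) \<in> Po ` pos G" if k1: "1 \<le> k" and kM: "k < M" for k
  proof -
    obtain k' where k': "k = Suc k'" using k1 by (cases k) auto
    obtain y where y: "walk G s k = Some y" using nn[of k] kM by (cases "walk G s k") auto
    have "y \<in> tgts G" using walk_tgts[OF w d] y k' by blast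
    moreover have "walk G s (Suc k) \<noteq> None" using nn[of "Suc k"] kM by simp
    then have "nxt G y \<noteq> None" using y by (simp add: walk.simps(2))
    then have "\<not> isEx y" using wfg_nxt_Ex[OF w] by (cases y) auto
    ultimately show ?thesis using y by (auto simp: tgts_def)
  qed
  have inj: "inj_on (\<lambda>k. the (walk G s k)) {1..<M}"
  proof (rule inj_onI, rule ccontr)
    fix a b assume a: "a \<in> {1..<M}" and b: "b \<in> {1..<M}" and eq: "the (walk G s a) = the (walk G s b)" and ne: "a \<noteq> b"
    have key: False if ab: "a < b" "a < M" "b < M" "the (walk G s a) = the (walk G s b)" for a b
    proof -
      have "walk G s a = walk G s b" using ab nn[of a] nn[of b] by (cases "walk G s a"; cases "walk G s b") auto
      then have "walk G s (b + (Suc M - b)) = walk G s (a + (Suc M - b))" by (simp add: walk_add)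
      moreover have "b + (Suc M - b) = Suc M" using ab by simp
      moreover have "a + (Suc M - b) \<le> M" using ab by simp
      ultimately show False using sucM nn by metis
    qed
    show False
    proof (cases "a < b")
      case True then show ?thesis using key[of a b] a b eq by auto
    next
      case False then have "b < a" using ne by simp
      then show ?thesis using key[of b a] a b eq by auto
    qed
  qed
  have "card {1..<M} \<le> card (Po ` pos G)"
    using inj inPo w by (intro card_inj_on_le) (auto simp: wfg_def)
  also have "\<dots> = card (pos G)" by (rule card_image) (simp add: inj_on_def)
  finally show ?thesis using lps by simp
qed


lemma chainE_snoc: "chainE E s (is @ [i]) t \<longleftrightarrow> chainE E s is (Ex i) \<and> (En i, t) \<in> E"
  by (induction "is" arbitrary: s) auto

definition tG :: "nat \<Rightarrow> nat \<Rightarrow> 'q game \<Rightarrow> 'q game" where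
  "tG l n G = G\<lparr>edges := {(s,t). s \<in> srcs G \<and> t \<in> Ex ` {l+1..l+n} \<union> Po ` pos G
      \<and> (\<exists>is. set is \<subseteq> {1..l} \<and> chainE (edges G) s is t)}\<rparr>"

lemma no_wire_loop:
  assumes G: "is_roMPG G" and lx: "l \<le> ext G"
    and dd: "\<forall>j. d j \<in> {1..l} \<and> (En (d j), Ex (d (Suc j))) \<in> edges G"
    and p: "(p, Ex (d 0)) \<in> edges G" "p \<notin> En ` {1..l}"
  shows False
proof -
  have pred: "s = s'" if "(s, Ex j) \<in> edges G" "(s', Ex j) \<in> edges G" "j \<in> {1..l}" for s s' j
  proof -
    have "j \<in> {1..ext G}" using that(3) lx by auto
    then show ?thesis using G that(1,2) unfolding is_roMPG_def by blast
  qed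
  have "\<not> inj_on d {0..l}"
  proof
    assume "inj_on d {0..l}"
    then have "card {0..l} \<le> card {1..l}" using dd by (intro card_inj_on_le) auto
    then show False by simp
  qed
  then obtain a b where ab: "a \<in> {0..l}" "b \<in> {0..l}" "a \<noteq> b" "d a = d b" unfolding inj_on_def by blast
  define P where "P b \<longleftrightarrow> (\<exists>a<b. d a = d b)" for b
  have "\<exists>b. P b" using ab unfolding P_def by (metis nat_neq_iff)
  define b0 where "b0 = (LEAST b. P b)"
  have Pb0: "P b0" using LeastI_ex[OF \<open>\<exists>b. P b\<close>] b0_def by simp
  then obtain a0 where a0: "a0 < b0" "d a0 = d b0" unfolding P_def by blast
  obtain b1 where b1: "b0 = Suc b1" using a0 by (cases b0) auto
  have e_b: "(En (d b1), Ex (d b0)) \<in> edges G" using dd b1 by simp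
  show False
  proof (cases a0)
    case 0
    then have "(p, Ex (d b0)) \<in> edges G" using p a0 by simp
    then have "p = En (d b1)" using pred e_b dd by blast
    then show False using p dd by blast
  next
    case (Suc a1)
    have e_a: "(En (d a1), Ex (d b0)) \<in> edges G" using dd Suc a0 by metis
    then have "En (d a1) = En (d b1)" using pred e_b dd by blast
    then have "P b1" unfolding P_def using a0 Suc b1 by auto
    then have "b0 \<le> b1" unfolding b0_def by (rule Least_le)
    then show False using b1 by simp
  qed
qed

context
  fixes G :: "'c game" and l m n :: nat
  assumes G: "is_roPG G" and eG: "ent G = l + m" and xG: "ext G = l + n"
begin

lemma wG: "wfg G" using G by (rule roPG_wfg)
lemma dG: "det G" using G by (rule roPG_det)
lemma mG: "is_roMPG G" using G by (simp add: is_roPG_def)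

lemma tG_simps: "ent (tG l n G) = ent G" "ext (tG l n G) = ext G" "pos (tG l n G) = pos G"
  "role (tG l n G) = role G" "wt (tG l n G) = wt G" "srcs (tG l n G) = srcs G" "tgts (tG l n G) = tgts G"
  by (simp_all add: tG_def srcs_def tgts_def)

lemma tG_edge: "(s,t) \<in> edges (tG l n G) \<longleftrightarrow> s \<in> srcs G \<and> t \<in> Ex ` {l+1..l+n} \<union> Po ` pos G
      \<and> (\<exists>is. set is \<subseteq> {1..l} \<and> chainE (edges G) s is t)"
  by (simp add: tG_def)

lemma chain_det:
  "chainE (edges G) s is t \<Longrightarrow> chainE (edges G) s is' t' \<Longrightarrow> set is \<subseteq> {1..l} \<Longrightarrow> set is' \<subseteq> {1..l}
   \<Longrightarrow> t \<notin> Ex ` {1..l} \<Longrightarrow> t' \<notin> Ex ` {1..l} \<Longrightarrow> t = t'"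
proof (induction "is" arbitrary: s is')
  case Nil
  show ?case
  proof (cases is')
    case Nil
    then show ?thesis using Nil.prems dG unfolding det_def by auto
  next
    case (Cons i is2)
    then have "(s, Ex i) \<in> edges G" "(s, t) \<in> edges G" "i \<in> {1..l}" using Nil.prems by auto
    then show ?thesis using dG Nil.prems unfolding det_def by blast
  qed
next
  case (Cons i is1)
  show ?case
  proof (cases is')
    case Nil
    then have "(s, Ex i) \<in> edges G" "(s, t') \<in> edges G" "i \<in> {1..l}" using Cons.prems by auto
    then show ?thesis using dG Cons.prems unfolding det_def by blast
  next
    case (Cons i' is2)
    then have "(s, Ex i) \<in> edges G" "(s, Ex i') \<in> edges G" using Cons.prems by auto
    then have "i = i'" using dG unfolding det_def by blast
    then show ?thesis using Cons.IH[of "En i" is2] Cons.prems \<open>is' = _\<close> by auto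
  qed
qed

lemma tG_det: "det (tG l n G)"
  unfolding det_def tG_edge
proof (intro allI impI, elim conjE exE)
  fix s t t' xs ys assume "chainE (edges G) s xs t" "chainE (edges G) s ys t'" "set xs \<subseteq> {1..l}" "set ys \<subseteq> {1..l}"
    "t \<in> Ex ` {l+1..l+n} \<union> Po ` pos G" "t' \<in> Ex ` {l+1..l+n} \<union> Po ` pos G"
  moreover have "t \<notin> Ex ` {1..l}" "t' \<notin> Ex ` {1..l}" using calculation(5,6) by auto
  ultimately show "t = t'" using chain_det by blast
qed

lemma tG_wfg: "wfg (tG l n G)"
  using wG unfolding wfg_def tG_simps by (auto simp: tG_edge tgts_def xG)

lemma T_Po: "nxt G s = Some (Po q) \<Longrightarrow> nxt (tG l n G) s = Some (Po q)"
proof -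
  assume a: "nxt G s = Some (Po q)"
  then have e: "(s, Po q) \<in> edges G" using nxt_edge[OF dG] by blast
  then have "s \<in> srcs G" "Po q \<in> tgts G" using wfg_edge[OF wG] by blast+
  then have "(s, Po q) \<in> edges (tG l n G)" using e unfolding tG_edge
    by (auto simp: tgts_def intro!: exI[of _ "[]"])
  then show ?thesis using tG_det nxt_eq by blast
qed

lemma T_Exo: "nxt G s = Some (Ex x) \<Longrightarrow> \<not> x \<le> l \<Longrightarrow> nxt (tG l n G) s = Some (Ex x)"
proof -
  assume a: "nxt G s = Some (Ex x)" and x: "\<not> x \<le> l"
  then have e: "(s, Ex x) \<in> edges G" using nxt_edge[OF dG] by blast
  then have "s \<in> srcs G" "Ex x \<in> tgts G" using wfg_edge[OF wG] by blast+
  then have "(s, Ex x) \<in> edges (tG l n G)" using e x xG unfolding tG_edge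
    by (auto simp: tgts_def intro!: exI[of _ "[]"])
  then show ?thesis using tG_det nxt_eq by blast
qed

lemma T_None: "nxt G s = None \<Longrightarrow> nxt (tG l n G) s = None"
proof -
  assume "nxt G s = None"
  then have "(s,t) \<notin> edges G" for t by (simp add: nxt_None_iff)
  then have "(s,t) \<notin> edges (tG l n G)" for t unfolding tG_edge by (metis chainE.elims(2))
  then show ?thesis by (simp add: nxt_None)
qed

lemma nxt_same: "(\<forall>t. (x,t) \<in> edges H \<longleftrightarrow> (y,t) \<in> edges H) \<Longrightarrow> nxt H x = nxt H y"
  unfolding nxt_def by simp

lemma T_Exi: "nxt G s = Some (Ex e) \<Longrightarrow> e \<in> {1..l} \<Longrightarrow> nxt (tG l n G) s = nxt (tG l n G) (En e)"
proof -
  assume a: "nxt G s = Some (Ex e)" and e: "e \<in> {1..l}"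
  then have es: "(s, Ex e) \<in> edges G" using nxt_edge[OF dG] by blast
  then have s: "s \<in> srcs G" using wfg_edge[OF wG] by blast
  have Es: "En e \<in> srcs G" using e eG by (auto simp: srcs_def)
  have "(s,t) \<in> edges (tG l n G) \<longleftrightarrow> (En e, t) \<in> edges (tG l n G)" for t
  proof
    assume "(s,t) \<in> edges (tG l n G)"
    then obtain "is" where c: "set is \<subseteq> {1..l}" "chainE (edges G) s is t" and t: "t \<in> Ex ` {l+1..l+n} \<union> Po ` pos G"
      unfolding tG_edge by blast
    show "(En e, t) \<in> edges (tG l n G)"
    proof (cases "is")
      case Nil
      then have "(s,t) \<in> edges G" using c by simp
      then have "t = Ex e" using es dG unfolding det_def by blast
      then show ?thesis using t e by auto
    next
      case (Cons i is2)
      then have "(s, Ex i) \<in> edges G" "chainE (edges G) (En i) is2 t" using c by auto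
      moreover then have "i = e" using es dG unfolding det_def by blast
      ultimately show ?thesis using Es t c Cons unfolding tG_edge by auto
    qed
  next
    assume "(En e, t) \<in> edges (tG l n G)"
    then obtain "is" where c: "set is \<subseteq> {1..l}" "chainE (edges G) (En e) is t" and t: "t \<in> Ex ` {l+1..l+n} \<union> Po ` pos G"
      unfolding tG_edge by blast
    have "chainE (edges G) s (e # is) t" using c es by simp
    moreover have "set (e # is) \<subseteq> {1..l}" using c e by simp
    ultimately show "(s,t) \<in> edges (tG l n G)" using s t unfolding tG_edge by blast
  qed
  then show ?thesis by (intro nxt_same) blast
qed

lemma NC:
  assumes s: "s \<in> srcs G" and sn: "s \<notin> En ` {1..l}" and ne: "nxt G s = Some (Ex e)" and e: "e \<in> {1..l}"
  shows "nxt (tG l n G) s \<noteq> None"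
proof
  assume N: "nxt (tG l n G) s = None"
  then have noT: "(s,t) \<notin> edges (tG l n G)" for t by (simp add: nxt_None_iff)
  define d :: "nat \<Rightarrow> nat" where "d = rec_nat e (\<lambda>_ dj. case nxt G (En dj) of Some (Ex k) \<Rightarrow> k | _ \<Rightarrow> 0)"
  have d0: "d 0 = e" by (simp add: d_def)
  have dS: "d (Suc j) = (case nxt G (En (d j)) of Some (Ex k) \<Rightarrow> k | _ \<Rightarrow> 0)" for j by (simp add: d_def)
  have step: "nxt G (En (d j)) = Some (Ex (d (Suc j))) \<and> d (Suc j) \<in> {1..l}"
    if dj: "d j \<in> {1..l}" and ch: "chainE (edges G) s (map d [0..<j]) (Ex (d j))" and st: "set (map d [0..<j]) \<subseteq> {1..l}" for j
  proof -
    have "d j \<in> {1..ent G}" using dj eG by auto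
    then obtain t where t: "(En (d j), t) \<in> edges G" using mG unfolding is_roMPG_def by blast
    then have nt: "nxt G (En (d j)) = Some t" using nxt_eq dG by blast
    have tt: "t \<in> tgts G" using t wfg_edge[OF wG] by blast
    have ch2: "chainE (edges G) s (map d [0..<Suc j]) t" using ch t by (simp add: chainE_snoc)
    have st2: "set (map d [0..<Suc j]) \<subseteq> {1..l}" using st dj by simp
    have "t \<notin> Ex ` {l+1..l+n} \<union> Po ` pos G"
    proof
      assume "t \<in> Ex ` {l+1..l+n} \<union> Po ` pos G"
      then have "(s,t) \<in> edges (tG l n G)" using s ch2 st2 unfolding tG_edge by blast
      then show False using noT by blast
    qed
    then obtain k where k: "t = Ex k" "k \<in> {1..l}"
    proof -
      assume nt: "t \<notin> Ex ` {l+1..l+n} \<union> Po ` pos G"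
      from tgts_cases[OF tt] show ?thesis
      proof
        assume "\<exists>j\<in>{1..ext G}. t = Ex j"
        then obtain j where j: "j \<in> {1..l+n}" "t = Ex j" using xG by auto
        then have "j \<notin> {l+1..l+n}" using nt by auto
        then have "j \<in> {1..l}" using j by auto
        then show ?thesis using j that by blast
      next
        assume "\<exists>q\<in>pos G. t = Po q"
        then show ?thesis using nt by auto
      qed
    qed
    then show ?thesis using nt dS[of j] by simp
  qed
  have inv: "d j \<in> {1..l} \<and> chainE (edges G) s (map d [0..<j]) (Ex (d j)) \<and> set (map d [0..<j]) \<subseteq> {1..l}" for j
  proof (induction j)
    case 0
    then show ?case using d0 e nxt_edge[OF dG ne] by simp
  next
    case (Suc j)
    then have st: "nxt G (En (d j)) = Some (Ex (d (Suc j))) \<and> d (Suc j) \<in> {1..l}" using step by blast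
    then have "(En (d j), Ex (d (Suc j))) \<in> edges G" using nxt_edge[OF dG] by blast
    then show ?case using Suc st by (simp add: chainE_snoc)
  qed
  have "\<forall>j. d j \<in> {1..l} \<and> (En (d j), Ex (d (Suc j))) \<in> edges G"
    using inv step nxt_edge[OF dG] by blast
  moreover have "(s, Ex (d 0)) \<in> edges G" using d0 nxt_edge[OF dG ne] by simp
  moreover have "l \<le> ext G" using xG by simp
  ultimately show False using no_wire_loop[OF mG] sn by blast
qed

lemma tG_fin:
  "runOf G s = RFin ps tm \<Longrightarrow> s \<in> srcs G \<Longrightarrow>
   runOf (tG l n G) s = (case tm of FEx e \<Rightarrow> (if e \<in> {1..l} then papp ps (runOf (tG l n G) (En e)) else RFin ps tm)
                         | FStar v \<Rightarrow> RFin ps tm)"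
proof (induction ps arbitrary: s)
  case Nil
  show ?case
  proof (cases "nxt G s")
    case None
    then have r: "runOf G s = RFin [] (dterm G s)" using runOf_unf[of G s] by (simp add: stepf_def)
    have "s \<notin> range Ex" using Nil.prems(2) by (auto simp: srcs_def)
    then have tm: "tm = dterm G s" "\<exists>v. tm = FStar v" using r Nil.prems(1) by (auto simp: dterm_def split: node.splits)
    have "runOf (tG l n G) s = RFin [] (dterm (tG l n G) s)"
      using runOf_unf[of "tG l n G" s] T_None[OF None] by (simp add: stepf_def)
    moreover have "dterm (tG l n G) s = dterm G s" by (simp add: dterm_def tG_simps split: node.splits)
    ultimately show ?thesis using tm by auto
  next
    case (Some t)
    then have "t \<in> tgts G" using wfg_nxt_tgt[OF wG dG] by blast
    then consider (E) x where "t = Ex x" "x \<in> {1..ext G}" | (P) q where "t = Po q" using tgts_cases by blast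
    then show ?thesis
    proof cases
      case E
      then have "runOf G s = RFin [] (FEx x)" using runOf_unf[of G s] Some wfg_nxt_Ex[OF wG] by (simp add: stepf_def dterm_def)
      then have tm: "tm = FEx x" using Nil.prems by simp
      show ?thesis
      proof (cases "x \<in> {1..l}")
        case True
        have nx: "nxt (tG l n G) s = nxt (tG l n G) (En x)" using T_Exi Some E True by blast
        have "runOf (tG l n G) s = runOf (tG l n G) (En x)"
        proof (cases "nxt (tG l n G) s")
          case None
          have "s \<in> En ` {1..l}"
          proof (rule ccontr)
            assume "s \<notin> En ` {1..l}"
            then show False using NC[OF Nil.prems(2) _ _ True] Some E None by simp
          qed
          then obtain e' where "s = En e'" by blast
          then show ?thesis using runOf_unf[of "tG l n G" s] runOf_unf[of "tG l n G" "En x"] None nx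
            by (simp add: stepf_def dterm_def)
        next
          case (Some t')
          then show ?thesis using runOf_unf[of "tG l n G" s] runOf_unf[of "tG l n G" "En x"] nx
            by (simp add: stepf_def)
        qed
        then show ?thesis using tm True by simp
      next
        case False
        then have "nxt (tG l n G) s = Some (Ex x)" using T_Exo Some E by simp
        then have "runOf (tG l n G) s = RFin [] (FEx x)"
          using runOf_unf[of "tG l n G" s] wfg_nxt_Ex[OF tG_wfg] by (simp add: stepf_def dterm_def)
        then show ?thesis using tm False by (auto simp del: atLeastAtMost_iff)
      qed
    next
      case P
      then have "runOf G s = pcons (wt G q) (runOf G (Po q))" using runOf_unf[of G s] Some by (simp add: stepf_def)
      then show ?thesis using Nil.prems by (cases "runOf G (Po q)") auto
    qed
  qed
next
  case (Cons p ps)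
  show ?case
  proof (cases "nxt G s")
    case None
    then have "runOf G s = RFin [] (dterm G s)" using runOf_unf[of G s] by (simp add: stepf_def)
    then show ?thesis using Cons.prems by simp
  next
    case (Some t)
    then have "t \<in> tgts G" using wfg_nxt_tgt[OF wG dG] by blast
    then consider (E) x where "t = Ex x" | (P) q where "q \<in> pos G" "t = Po q" using tgts_cases by blast
    then show ?thesis
    proof cases
      case E
      then have "runOf G s = RFin [] (FEx x)" using runOf_unf[of G s] Some wfg_nxt_Ex[OF wG] by (simp add: stepf_def dterm_def)
      then show ?thesis using Cons.prems by simp
    next
      case P
      then have r: "runOf G s = pcons (wt G q) (runOf G (Po q))" using runOf_unf[of G s] Some by (simp add: stepf_def)
      then have rq: "runOf G (Po q) = RFin ps tm" and pw: "p = wt G q" using Cons.prems by (cases "runOf G (Po q)"; auto)+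
      have qs: "Po q \<in> srcs G" using P by (simp add: srcs_def)
      have "runOf (tG l n G) s = pcons (wt G q) (runOf (tG l n G) (Po q))"
        using runOf_unf[of "tG l n G" s] T_Po[OF Some[unfolded P(2)]] by (simp add: stepf_def tG_simps)
      then show ?thesis using Cons.IH[OF rq qs] pw by (cases tm) auto
    qed
  qed
qed

lemma tG_inf:
  assumes r: "runOf G s = RInf ws" and s: "s \<in> srcs G"
  shows "runOf (tG l n G) s = RInf ws"
proof -
  let ?A = "{s \<in> srcs G. \<exists>ws. runOf G s = RInf ws}"
  have key: "\<exists>q. q \<in> pos G \<and> nxt G s = Some (Po q) \<and> runOf G s = pcons (wt G q) (runOf G (Po q))
           \<and> (\<exists>ws. runOf G (Po q) = RInf ws)" if "s \<in> ?A" for s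
  proof (cases "nxt G s")
    case None
    then have "runOf G s = RFin [] (dterm G s)" using runOf_unf[of G s] by (simp add: stepf_def)
    then show ?thesis using that by auto
  next
    case (Some t)
    then have "t \<in> tgts G" using wfg_nxt_tgt[OF wG dG] by blast
    then consider (E) x where "t = Ex x" | (P) q where "q \<in> pos G" "t = Po q" using tgts_cases by blast
    then show ?thesis
    proof cases
      case E
      then have "runOf G s = RFin [] (FEx x)" using runOf_unf[of G s] Some wfg_nxt_Ex[OF wG] by (simp add: stepf_def dterm_def)
      then show ?thesis using that by auto
    next
      case P
      then have r: "runOf G s = pcons (wt G q) (runOf G (Po q))" using runOf_unf[of G s] Some by (simp add: stepf_def)
      then have "\<exists>ws. runOf G (Po q) = RInf ws" using that by (cases "runOf G (Po q)") auto
      then show ?thesis using P Some r by blast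
    qed
  qed
  have "runOf G s = runOf (tG l n G) s"
  proof (rule uniq_runOf[where A = ?A])
    show "\<forall>s\<in>?A. runOf G s = stepf (tG l n G) (runOf G) s"
    proof
      fix s assume sA: "s \<in> ?A"
      then obtain q where q: "q \<in> pos G" "nxt G s = Some (Po q)" "runOf G s = pcons (wt G q) (runOf G (Po q))"
        using key by blast
      then show "runOf G s = stepf (tG l n G) (runOf G) s" using T_Po[OF q(2)] by (simp add: stepf_def tG_simps)
    qed
    show "\<forall>s\<in>?A. \<forall>t. nxt (tG l n G) s = Some t \<longrightarrow> \<not> (isEx t \<and> nxt (tG l n G) t = None) \<longrightarrow> t \<in> ?A"
    proof (intro ballI allI impI)
      fix s t assume sA: "s \<in> ?A" and t: "nxt (tG l n G) s = Some t"
      obtain q where q: "q \<in> pos G" "nxt G s = Some (Po q)" "\<exists>ws. runOf G (Po q) = RInf ws"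
        using key sA by blast
      then have "t = Po q" using T_Po[OF q(2)] t by simp
      then show "t \<in> ?A" using q by (simp add: srcs_def)
    qed
  qed (use r s in auto)
  then show ?thesis using r by simp
qed

lemma gtr_simps: "role (gtrace l m n G) = role G" "wt (gtrace l m n G) = wt G"
  by (simp_all add: gtrace_def)

lemma gtr_edge: "(x,t) \<in> edges (gtrace l m n G) \<longleftrightarrow> x \<in> En ` {1..m} \<union> Po ` pos G \<and> t \<in> Ex ` {1..n} \<union> Po ` pos G
   \<and> (\<exists>is. set is \<subseteq> {1..l} \<and> chainE (edges G) (hat_src l x) is (hat_tgt l t))"
  by (simp add: gtrace_def)

fun unhat :: "nat \<Rightarrow> 'q node \<Rightarrow> 'q node" where
  "unhat k (Ex y) = Ex (y - k)" | "unhat k (En i) = En i" | "unhat k (Po q) = Po q"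

lemma gtr_via:
  assumes x: "x \<in> En ` {1..m} \<union> range Po"
  shows "\<forall>t. (x,t) \<in> edges (gtrace l m n G) \<longleftrightarrow> (\<exists>t'. t = unhat l t' \<and> (hat_src l x, t') \<in> edges (tG l n G))"
proof
  fix t
  have xs: "x \<in> En ` {1..m} \<union> Po ` pos G \<longleftrightarrow> hat_src l x \<in> srcs G"
    using x eG by (auto simp: srcs_def)
  show "(x,t) \<in> edges (gtrace l m n G) \<longleftrightarrow> (\<exists>t'. t = unhat l t' \<and> (hat_src l x, t') \<in> edges (tG l n G))"
  proof
    assume "(x,t) \<in> edges (gtrace l m n G)"
    then have a: "x \<in> En ` {1..m} \<union> Po ` pos G" "t \<in> Ex ` {1..n} \<union> Po ` pos G"
      "\<exists>is. set is \<subseteq> {1..l} \<and> chainE (edges G) (hat_src l x) is (hat_tgt l t)" unfolding gtr_edge by blast+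
    have "hat_tgt l t \<in> Ex ` {l+1..l+n} \<union> Po ` pos G" "unhat l (hat_tgt l t) = t"
      using a(2) by auto
    moreover have "hat_src l x \<in> srcs G" using xs a(1) by blast
    ultimately have "(hat_src l x, hat_tgt l t) \<in> edges (tG l n G)"
      using a(3) unfolding tG_edge by blast
    then show "\<exists>t'. t = unhat l t' \<and> (hat_src l x, t') \<in> edges (tG l n G)"
      using \<open>unhat l (hat_tgt l t) = t\<close> by (intro exI[of _ "hat_tgt l t"]) simp
  next
    assume "\<exists>t'. t = unhat l t' \<and> (hat_src l x, t') \<in> edges (tG l n G)"
    then obtain t' where t': "t = unhat l t'" "hat_src l x \<in> srcs G" "t' \<in> Ex ` {l+1..l+n} \<union> Po ` pos G"
      "\<exists>is. set is \<subseteq> {1..l} \<and> chainE (edges G) (hat_src l x) is t'" unfolding tG_edge by blast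
    have "t \<in> Ex ` {1..n} \<union> Po ` pos G" "hat_tgt l t = t'"
      using t'(1,3) by (auto simp: image_iff)
    moreover have "x \<in> En ` {1..m} \<union> Po ` pos G" using xs t'(2) by blast
    ultimately show "(x,t) \<in> edges (gtrace l m n G)" unfolding gtr_edge using t'(4) by simp
  qed
qed

lemma gtr_nxt: "x \<in> En ` {1..m} \<union> range Po \<Longrightarrow>
   nxt (gtrace l m n G) x = map_option (unhat l) (nxt (tG l n G) (hat_src l x))"
  by (rule nxt_via[OF gtr_via tG_det])

lemma gtr_nxt_Ex: "nxt (gtrace l m n G) (Ex j) = None"
  by (rule nxt_None) (auto simp: gtr_edge)

definition Ftr :: "'c node \<Rightarrow> run" where
  "Ftr x = (case x of Ex j \<Rightarrow> RFin [] (FEx j) | _ \<Rightarrow> maprun (\<lambda>y. y - l) (runOf (tG l n G) (hat_src l x)))"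

lemma Ftr_fix:
  assumes x: "x \<in> En ` {1..m} \<union> range Po \<union> range Ex"
  shows "Ftr x = stepf (gtrace l m n G) Ftr x"
proof (cases "isEx x")
  case True
  then obtain j where "x = Ex j" by (cases x) auto
  then show ?thesis by (simp add: stepf_def gtr_nxt_Ex Ftr_def dterm_def)
next
  case False
  then have x2: "x \<in> En ` {1..m} \<union> range Po" using x by auto
  have "stepf (gtrace l m n G) Ftr x = maprun (\<lambda>y. y - l) (runOf (tG l n G) (hat_src l x))"
  proof (rule transport[OF tG_wfg tG_det])
    show "nxt (gtrace l m n G) x = map_option (unhat l) (nxt (tG l n G) (hat_src l x))"
      using gtr_nxt[OF x2] .
    show "nxt (tG l n G) (hat_src l x) = None \<Longrightarrow> dterm (gtrace l m n G) x = maptm (\<lambda>y. y - l) (dterm (tG l n G) (hat_src l x))"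
      using x2 by (auto simp: dterm_def gtr_simps tG_simps)
  qed (auto simp: gtr_nxt_Ex Ftr_def gtr_simps tG_simps)
  moreover have "Ftr x = maprun (\<lambda>y. y - l) (runOf (tG l n G) (hat_src l x))"
    using False by (cases x) (auto simp: Ftr_def)
  ultimately show ?thesis by simp
qed

lemma gtr_runOf:
  assumes i: "i \<in> {1..m}"
  shows "runOf (gtrace l m n G) (En i) = maprun (\<lambda>y. y - l) (runOf (tG l n G) (En (l + i)))"
proof -
  let ?A = "En ` {1..m} \<union> range Po \<union> range Ex"
  have "Ftr (En i) = runOf (gtrace l m n G) (En i)"
  proof (rule uniq_runOf[where A = ?A])
    show "\<forall>s\<in>?A. Ftr s = stepf (gtrace l m n G) Ftr s" using Ftr_fix by blast
    show "\<forall>s\<in>?A. \<forall>t. nxt (gtrace l m n G) s = Some t \<longrightarrow> \<not> (isEx t \<and> nxt (gtrace l m n G) t = None) \<longrightarrow> t \<in> ?A"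
    proof (intro ballI allI impI)
      fix s t assume sA: "s \<in> ?A" and t: "nxt (gtrace l m n G) s = Some t"
      show "t \<in> ?A"
      proof (cases "isEx s")
        case True
        then show ?thesis using t gtr_nxt_Ex by (cases s) auto
      next
        case False
        then have s2: "s \<in> En ` {1..m} \<union> range Po" using sA by auto
        have "map_option (unhat l) (nxt (tG l n G) (hat_src l s)) = Some t" using t gtr_nxt[OF s2] by simp
        then obtain t' where t': "nxt (tG l n G) (hat_src l s) = Some t'" "t = unhat l t'" by blast
        then have "t' \<in> tgts (tG l n G)" using wfg_nxt_tgt[OF tG_wfg tG_det] by blast
        then show ?thesis using t' by (auto simp: tgts_def)
      qed
    qed
  qed (use i in auto)
  then show ?thesis by (simp add: Ftr_def)
qed

end


lemma enumerate_Suc_image: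
  fixes S :: "nat set"
  assumes "infinite S"
  shows "enumerate (Suc ` S) t = Suc (enumerate S t)"
  using assms
proof (induction t arbitrary: S)
  case 0
  have ne: "S \<noteq> {}" using 0 by auto
  have "(LEAST n. n \<in> Suc ` S) = Suc (LEAST n. n \<in> S)"
  proof (rule Least_equality)
    show "Suc (LEAST n. n \<in> S) \<in> Suc ` S" using ne by (auto intro: LeastI)
    show "\<And>y. y \<in> Suc ` S \<Longrightarrow> Suc (LEAST n. n \<in> S) \<le> y" by (auto intro: Least_le)
  qed
  then show ?case by (simp add: enumerate_0)
next
  case (Suc t)
  have ne: "S \<noteq> {}" using Suc.prems by auto
  have L: "(LEAST n. n \<in> Suc ` S) = Suc (LEAST n. n \<in> S)"
  proof (rule Least_equality)
    show "Suc (LEAST n. n \<in> S) \<in> Suc ` S" using ne by (auto intro: LeastI)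
    show "\<And>y. y \<in> Suc ` S \<Longrightarrow> Suc (LEAST n. n \<in> S) \<le> y" by (auto intro: Least_le)
  qed
  have "Suc ` S - {Suc (LEAST n. n \<in> S)} = Suc ` (S - {LEAST n. n \<in> S})" by auto
  moreover have "infinite (S - {LEAST n. n \<in> S})" using Suc.prems by simp
  ultimately show ?case using Suc.IH by (simp add: enumerate_Suc L)
qed

lemma enumerate_gap:
  fixes S :: "nat set"
  assumes S: "infinite S" and j: "enumerate S t < j" "j < enumerate S (Suc t)"
  shows "j \<notin> S"
proof
  assume "j \<in> S"
  then obtain u where u: "enumerate S u = j" using enumerate_Ex[OF S] by blast
  then have "t < u" "u < Suc t" using j S by (metis enumerate_mono_iff)+
  then show False by simp
qed

lemma enumerate_before:
  fixes S :: "nat set"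
  assumes "j < enumerate S 0"
  shows "j \<notin> S"
  using assms not_less_Least[of j "\<lambda>n. n \<in> S"] by (simp add: enumerate_0)

lemma concat_enum:
  fixes P :: "nat \<Rightarrow> 'a list"
  assumes S: "infinite S" and NE: "\<forall>j. j \<notin> S \<longrightarrow> P j = []"
  shows "concat (map P [0..<enumerate S t]) = concat (map (\<lambda>u. P (enumerate S u)) [0..<t])"
proof (induction t)
  case 0
  have "\<forall>j\<in>set [0..<enumerate S 0]. P j = []" using enumerate_before NE by auto
  then show ?case by simp
next
  case (Suc t)
  let ?a = "enumerate S t" and ?b = "enumerate S (Suc t)"
  have ab: "?a < ?b" using S by (simp add: enumerate_step)
  have "[0..<?b] = [0..<?a] @ [?a] @ [Suc ?a..<?b]"
    using ab by (metis append_Cons append_Nil le0 upt_add_eq_append upt_conv_Cons add_Suc_right less_imp_le_nat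
        le_add_diff_inverse add.commute)
  moreover have "\<forall>j\<in>set [Suc ?a..<?b]. P j = []" using enumerate_gap[OF S] NE by (auto simp: Suc_le_eq)
  ultimately show ?case using Suc by simp
qed

fun tidx :: "tval \<Rightarrow> nat" where
  "tidx (Idx k) = k" | "tidx (Wgt r k) = k" | "tidx _ = 0"

definition contl :: "nat \<Rightarrow> tval \<Rightarrow> bool" where
  "contl l v \<longleftrightarrow> (\<exists>k\<in>{1..l}. v = Idx k \<or> (\<exists>r. v = Wgt r k))"

lemma cont_out:
  assumes c: "contl l (outcome r)" and st: "\<And>ps v. r = RFin ps (FStar v) \<Longrightarrow> v = EStar \<or> v = AStar"
  shows "\<exists>ps. r = RFin ps (FEx (tidx (outcome r))) \<and> tidx (outcome r) \<in> {1..l}"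
proof (cases r)
  case (RFin ps tm)
  show ?thesis
  proof (cases tm)
    case (FEx k)
    then show ?thesis using c RFin by (cases "ps = []") (auto simp: contl_def)
  next
    case (FStar v)
    then show ?thesis using c RFin st by (auto simp: contl_def)
  qed
next
  case (RInf ws)
  then show ?thesis using c by (cases "mpv ws") (auto simp: contl_def)
qed

lemma sum_list_concat_upt: "sum_list (concat (map P [0..<J])) = (\<Sum>j<J. sum_list (P j))"
  for P :: "nat \<Rightarrow> real list"
  by (induction J) simp_all

context
  fixes G :: "'c game" and l m n i :: nat
  assumes G: "is_roPG G" and eG: "ent G = l + m" and xG: "ext G = l + n" and i: "i \<in> {1..m}"
begin

definition EE :: "nat \<Rightarrow> nat" where "EE = rec_nat (l + i) (\<lambda>_ e. tidx (Wsem G e))"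
definition PS :: "nat \<Rightarrow> real list" where
  "PS j = (case runOf G (En (EE j)) of RFin ps _ \<Rightarrow> ps | _ \<Rightarrow> [])"

lemma EE0: "EE 0 = l + i" by (simp add: EE_def)
lemma EES: "EE (Suc j) = tidx (Wsem G (EE j))" by (simp add: EE_def)

lemma VE: "(\<forall>j'<j. contl l (Wsem G (EE j'))) \<Longrightarrow> vseq l (Wsem G) i (Suc j) = Some (Wsem G (EE j))"
proof (induction j)
  case 0
  then show ?case by (simp add: EE0)
next
  case (Suc j)
  then have v: "vseq l (Wsem G) i (Suc j) = Some (Wsem G (EE j))" by simp
  have "contl l (Wsem G (EE j))" using Suc.prems by simp
  then obtain k where k: "k \<in> {1..l}" "Wsem G (EE j) = Idx k \<or> (\<exists>r. Wsem G (EE j) = Wgt r k)"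
    unfolding contl_def by blast
  then have "EE (Suc j) = k" using EES by auto
  then show ?case using v k by (auto simp del: vseq.simps(1))
qed

lemma VN: "(\<forall>j'<j. contl l (Wsem G (EE j'))) \<Longrightarrow> \<not> contl l (Wsem G (EE j)) \<Longrightarrow> vseq l (Wsem G) i (Suc (Suc j)) = None"
proof -
  assume p: "\<forall>j'<j. contl l (Wsem G (EE j'))" and nc: "\<not> contl l (Wsem G (EE j))"
  have v: "vseq l (Wsem G) i (Suc j) = Some (Wsem G (EE j))" using VE p by blast
  show ?thesis using v nc by (cases "Wsem G (EE j)") (auto simp: contl_def)
qed

lemma srcsE: "e \<in> {1..l+m} \<Longrightarrow> En e \<in> srcs G"
  using eG by (simp add: srcs_def)

lemma starG: "runOf G s = RFin ps (FStar v) \<Longrightarrow> v = EStar \<or> v = AStar"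
  using runOf_tm by fastforce

lemma EPS: "(\<forall>j'<j. contl l (Wsem G (EE j'))) \<Longrightarrow> EE j \<in> {1..l+m}
   \<and> runOf (tG l n G) (En (l+i)) = papp (concat (map PS [0..<j])) (runOf (tG l n G) (En (EE j)))
   \<and> (\<forall>j'<j. runOf G (En (EE j')) = RFin (PS j') (FEx (EE (Suc j'))) \<and> EE (Suc j') \<in> {1..l})"
proof (induction j)
  case 0
  then show ?case using i by (simp add: EE0)
next
  case (Suc j)
  then have IH: "EE j \<in> {1..l+m}"
    "runOf (tG l n G) (En (l+i)) = papp (concat (map PS [0..<j])) (runOf (tG l n G) (En (EE j)))"
    "\<forall>j'<j. runOf G (En (EE j')) = RFin (PS j') (FEx (EE (Suc j'))) \<and> EE (Suc j') \<in> {1..l}" by auto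
  have "contl l (Wsem G (EE j))" using Suc.prems by simp
  then have c: "contl l (outcome (runOf G (En (EE j))))" by (simp add: Wsem_outcome)
  have ee: "EE (Suc j) = tidx (outcome (runOf G (En (EE j))))" using EES[of j] by (simp add: Wsem_outcome)
  have ex: "\<exists>ps. runOf G (En (EE j)) = RFin ps (FEx (EE (Suc j))) \<and> EE (Suc j) \<in> {1..l}"
    using cont_out[OF c starG] unfolding ee[symmetric] .
  then obtain ps where ps: "runOf G (En (EE j)) = RFin ps (FEx (EE (Suc j)))" "EE (Suc j) \<in> {1..l}"
    by (elim exE conjE) simp
  have PSj: "PS j = ps" using ps by (simp add: PS_def)
  have "runOf (tG l n G) (En (EE j)) = papp ps (runOf (tG l n G) (En (EE (Suc j))))"
    using tG_fin[OF G eG xG ps(1) srcsE[OF IH(1)]] ps(2) by simp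
  then have "runOf (tG l n G) (En (l+i)) = papp (concat (map PS [0..<Suc j])) (runOf (tG l n G) (En (EE (Suc j))))"
    using IH(2) PSj by (simp add: papp_append)
  moreover have "EE (Suc j) \<in> {1..l+m}" using ps(2) by auto
  moreover have "\<forall>j'<Suc j. runOf G (En (EE j')) = RFin (PS j') (FEx (EE (Suc j'))) \<and> EE (Suc j') \<in> {1..l}"
    using IH(3) ps PSj by (auto simp: less_Suc_eq)
  ultimately show ?case by blast
qed

lemma sem_fin:
  assumes ex: "\<exists>J. \<not> contl l (Wsem G (EE J))"
  shows "strace l n (Wsem G) i = outcome (maprun (\<lambda>y. y - l) (runOf (tG l n G) (En (l + i))))"
proof -
  define J where "J = (LEAST J. \<not> contl l (Wsem G (EE J)))"
  have nJ: "\<not> contl l (Wsem G (EE J))" using LeastI_ex[OF ex] J_def by simp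
  have pre: "\<forall>j'<J. contl l (Wsem G (EE j'))" using not_less_Least J_def by blast
  have vle: "vseq l (Wsem G) i (Suc j) = Some (Wsem G (EE j))" if "j \<le> J" for j
    using VE pre that by simp
  have vN: "vseq l (Wsem G) i (Suc (Suc J)) = None" using VN pre nJ by blast
  have exN: "\<exists>j. vseq l (Wsem G) i (Suc j) = None" using vN by blast
  have K: "(LEAST j. vseq l (Wsem G) i (Suc j) = None) = Suc J"
  proof (rule Least_equality)
    show "vseq l (Wsem G) i (Suc (Suc J)) = None" by (rule vN)
  next
    fix y assume y: "vseq l (Wsem G) i (Suc y) = None"
    show "Suc J \<le> y"
    proof (rule ccontr)
      assume "\<not> Suc J \<le> y"
      then have "y \<le> J" by simp
      then show False using vle[of y] y by simp
    qed
  qed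
  have thK: "the (vseq l (Wsem G) i (Suc J)) = Wsem G (EE J)" using vle by simp
  define PSJ where "PSJ = concat (map PS [0..<J])"
  have EPSJ: "EE J \<in> {1..l+m}"
    "runOf (tG l n G) (En (l+i)) = papp PSJ (runOf (tG l n G) (En (EE J)))"
    "\<forall>j'<J. runOf G (En (EE j')) = RFin (PS j') (FEx (EE (Suc j'))) \<and> EE (Suc j') \<in> {1..l}"
    using EPS[OF pre] unfolding PSJ_def by auto
  have Wj: "Wsem G (EE j) = (if PS j = [] then Idx (EE (Suc j)) else Wgt (sum_list (PS j)) (EE (Suc j)))"
    and Ej: "EE (Suc j) \<in> {1..l}" if "j < J" for j
    using EPSJ(3) that by (simp_all add: Wsem_outcome)
  define g where "g v = (case v of Wgt r k \<Rightarrow> (if k \<in> {1..l + n} then r else 0) | _ \<Rightarrow> 0)" for v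
  have gj: "g (Wsem G (EE j)) = sum_list (PS j)" if "j < J" for j
    using Wj[OF that] Ej[OF that] by (auto simp: g_def)
  have Seq: "(\<Sum>j\<in>{Suc 0..Suc J}. g (the (vseq l (Wsem G) i j))) = sum_list PSJ + g (Wsem G (EE J))"
  proof -
    have "(\<Sum>j\<in>{Suc 0..Suc J}. g (the (vseq l (Wsem G) i j))) = (\<Sum>j<Suc J. g (the (vseq l (Wsem G) i (Suc j))))"
      using sum.atLeast1_atMost_eq[of "\<lambda>j. g (the (vseq l (Wsem G) i j))" "Suc J"] by simp
    also have "\<dots> = (\<Sum>j<Suc J. g (Wsem G (EE j)))" using vle by (intro sum.cong) auto
    also have "\<dots> = (\<Sum>j<J. g (Wsem G (EE j))) + g (Wsem G (EE J))" by simp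
    also have "(\<Sum>j<J. g (Wsem G (EE j))) = (\<Sum>j<J. sum_list (PS j))" using gj by (intro sum.cong) auto
    also have "\<dots> = sum_list PSJ" unfolding PSJ_def by (simp add: sum_list_concat_upt)
    finally show ?thesis .
  qed
  have cond: "(\<forall>j\<in>{1..<Suc J}. \<exists>k\<in>{1..l}. the (vseq l (Wsem G) i j) = Idx k) \<longleftrightarrow> PSJ = []"
  proof -
    have "(\<forall>j\<in>{1..<Suc J}. \<exists>k\<in>{1..l}. the (vseq l (Wsem G) i j) = Idx k) \<longleftrightarrow>
          (\<forall>j<J. \<exists>k\<in>{1..l}. Wsem G (EE j) = Idx k)"
    proof
      assume a: "\<forall>j\<in>{1..<Suc J}. \<exists>k\<in>{1..l}. the (vseq l (Wsem G) i j) = Idx k"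
      show "\<forall>j<J. \<exists>k\<in>{1..l}. Wsem G (EE j) = Idx k"
      proof (intro allI impI)
        fix j assume "j < J"
        then show "\<exists>k\<in>{1..l}. Wsem G (EE j) = Idx k" using a[rule_format, of "Suc j"] vle[of j] by simp
      qed
    next
      assume a: "\<forall>j<J. \<exists>k\<in>{1..l}. Wsem G (EE j) = Idx k"
      show "\<forall>j\<in>{1..<Suc J}. \<exists>k\<in>{1..l}. the (vseq l (Wsem G) i j) = Idx k"
      proof
        fix j assume j: "j \<in> {1..<Suc J}"
        then obtain j' where j': "j = Suc j'" "j' < J" by (cases j) auto
        then show "\<exists>k\<in>{1..l}. the (vseq l (Wsem G) i j) = Idx k" using a vle[of j'] by simp
      qed
    qed
    also have "\<dots> \<longleftrightarrow> (\<forall>j<J. PS j = [])"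
      using Wj Ej by (auto split: if_splits)
    also have "\<dots> \<longleftrightarrow> PSJ = []" unfolding PSJ_def by auto
    finally show ?thesis .
  qed
  have st: "strace l n (Wsem G) i = (case Wsem G (EE J) of EStar \<Rightarrow> EStar | AStar \<Rightarrow> AStar
     | Idx x \<Rightarrow> (if (\<forall>j\<in>{1..<Suc J}. \<exists>k\<in>{1..l}. the (vseq l (Wsem G) i j) = Idx k)
                then Idx (x - l) else Wgt (\<Sum>j\<in>{Suc 0..Suc J}. g (the (vseq l (Wsem G) i j))) (x - l))
     | Wgt r x \<Rightarrow> Wgt (\<Sum>j\<in>{Suc 0..Suc J}. g (the (vseq l (Wsem G) i j))) (x - l))"
    unfolding strace_def g_def using exN K thK by (simp add: Let_def)
  show ?thesis
  proof (cases "runOf G (En (EE J))")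
    case (RFin ps tm)
    show ?thesis
    proof (cases tm)
      case (FEx x)
      have Wx: "Wsem G (EE J) = (if ps = [] then Idx x else Wgt (sum_list ps) x)"
        using RFin FEx by (simp add: Wsem_outcome)
      have xl: "x \<notin> {1..l}" using nJ Wx by (auto simp: contl_def split: if_splits)
      have T: "runOf (tG l n G) (En (EE J)) = RFin ps (FEx x)"
        using tG_fin[OF G eG xG _ srcsE[OF EPSJ(1)], of ps tm] RFin FEx xl by (simp del: atLeastAtMost_iff)
      obtain p where "(p, Ex x) \<in> edges G"
        using runOf_exit_pred[OF wG[OF G eG xG] dG[OF G eG xG]] RFin FEx by fastforce
      then have "Ex x \<in> tgts G" using wfg_edge[OF wG[OF G eG xG]] by blast
      then have x: "x \<in> {1..l+n}" using xG by (auto simp: tgts_def)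
      have TT: "runOf (tG l n G) (En (l+i)) = RFin (PSJ @ ps) (FEx x)" using EPSJ(2) T by (simp add: papp_Fin)
      have gx: "g (Wsem G (EE J)) = (if ps = [] then 0 else sum_list ps)" using Wx x by (simp add: g_def)
      show ?thesis using st TT Wx Seq gx cond by (auto)
    next
      case (FStar v)
      have v: "v = EStar \<or> v = AStar" using starG RFin FStar by blast
      have Wx: "Wsem G (EE J) = v" using RFin FStar by (simp add: Wsem_outcome)
      have T: "runOf (tG l n G) (En (EE J)) = RFin ps (FStar v)"
        using tG_fin[OF G eG xG _ srcsE[OF EPSJ(1)], of ps tm] RFin FStar by simp
      have TT: "runOf (tG l n G) (En (l+i)) = RFin (PSJ @ ps) (FStar v)" using EPSJ(2) T by (simp add: papp_Fin)
      show ?thesis using st TT Wx v by auto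
    qed
  next
    case (RInf ws)
    have Wx: "Wsem G (EE J) = (if mpv ws then EStar else AStar)" using RInf by (simp add: Wsem_outcome)
    have T: "runOf (tG l n G) (En (EE J)) = RInf ws"
      using tG_inf[OF G eG xG RInf srcsE[OF EPSJ(1)]] .
    have b: "bnd ws" using runOf_bnd[OF tG_wfg[OF G eG xG] tG_det[OF G eG xG] T] .
    have TT: "runOf (tG l n G) (En (l+i)) = RInf (shl PSJ ws)" using EPSJ(2) T by (simp add: papp_Inf)
    show ?thesis using st TT Wx mpv_shl[OF b] by simp
  qed
qed

lemma papp_Fin_inv: "papp X r = RFin P tm \<Longrightarrow> \<exists>qs. r = RFin qs tm \<and> P = X @ qs"
  by (cases r) (auto simp: papp_Fin papp_Inf)

lemma len_concat_ne: "(\<forall>t. B t \<noteq> []) \<Longrightarrow> t \<le> length (concat (map B [0..<t]))"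
proof (induction t)
  case (Suc t)
  then have h: "length (B t) > 0" by simp
  have "length (concat (map B [0..<Suc t])) = length (concat (map B [0..<t])) + length (B t)" by simp
  then show ?case using Suc.IH[OF Suc.prems] h by linarith
qed simp

lemma sem_inf:
  assumes all: "\<forall>J. contl l (Wsem G (EE J))"
  shows "strace l n (Wsem G) i = outcome (maprun (\<lambda>y. y - l) (runOf (tG l n G) (En (l + i))))"
proof -
  have vall: "vseq l (Wsem G) i (Suc j) = Some (Wsem G (EE j))" for j using VE all by blast
  have nex: "\<not> (\<exists>j. vseq l (Wsem G) i (Suc j) = None)" using vall by simp
  have E3: "EE j \<in> {1..l+m}"
    "runOf (tG l n G) (En (l+i)) = papp (concat (map PS [0..<j])) (runOf (tG l n G) (En (EE j)))" for j
    using EPS all by blast+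
  have runs: "runOf G (En (EE j)) = RFin (PS j) (FEx (EE (Suc j)))" "EE (Suc j) \<in> {1..l}" for j
    using EPS[of "Suc j"] all by auto
  have Wj: "Wsem G (EE j) = (if PS j = [] then Idx (EE (Suc j)) else Wgt (sum_list (PS j)) (EE (Suc j)))" for j
    using runs(1) by (simp add: Wsem_outcome)
  define NE where "NE = {j. PS j \<noteq> []}"
  have wire: "(En (EE j), Ex (EE (Suc j))) \<in> edges G" if "PS j = []" for j
  proof -
    have "runOf G (En (EE j)) = RFin [] (FEx (EE (Suc j)))" using runs(1) that by simp
    then show ?thesis using runOf_exit_pred[OF wG[OF G eG xG] dG[OF G eG xG]] by fastforce
  qed
  have lx: "l \<le> ext G" using xG by simp
  have inf: "infinite NE"
  proof
    assume fin: "finite NE"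
    show False
    proof (cases "NE = {}")
      case True
      then have e0: "PS j = []" for j unfolding NE_def by auto
      have "\<forall>j. EE (Suc j) \<in> {1..l} \<and> (En (EE (Suc j)), Ex (EE (Suc (Suc j)))) \<in> edges G"
        using runs(2) wire e0 by blast
      moreover have "(En (l+i), Ex (EE (Suc 0))) \<in> edges G" using wire[OF e0[of 0]] EE0 by simp
      moreover have "En (l+i) \<notin> En ` {1..l}" using i by auto
      ultimately show False using no_wire_loop[OF mG[OF G eG xG] lx, of "\<lambda>j. EE (Suc j)" "En (l+i)"] by blast
    next
      case False
      define J where "J = Max NE"
      have JN: "J \<in> NE" using fin False J_def by simp
      have after: "PS j = []" if "J < j" for j
      proof (rule ccontr)
        assume "PS j \<noteq> []"
        then have "j \<in> NE" by (simp add: NE_def)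
        then have "j \<le> J" using fin J_def by simp
        then show False using that by simp
      qed
      have "PS J \<noteq> []" using JN by (simp add: NE_def)
      then obtain q where q: "(Po q, Ex (EE (Suc J))) \<in> edges G"
        using runOf_exit_pred[OF wG[OF G eG xG] dG[OF G eG xG] runs(1)[of J]] by auto
      have "\<forall>j. EE (Suc (J + j)) \<in> {1..l} \<and> (En (EE (Suc (J + j))), Ex (EE (Suc (Suc (J + j))))) \<in> edges G"
        using runs(2) wire after by simp
      moreover have "Po q \<notin> En ` {1..l}" by auto
      ultimately show False using no_wire_loop[OF mG[OF G eG xG] lx, of "\<lambda>j. EE (Suc (J + j))" "Po q"] q by simp
    qed
  qed
  define en where "en = enumerate NE"
  define B where "B t = PS (en t)" for t
  have Bne: "\<forall>t. B t \<noteq> []" using enumerate_in_set[OF inf] unfolding B_def en_def NE_def by auto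
  have Blen: "\<forall>t. length (B t) \<le> card (pos G)"
    using runOf_len[OF wG[OF G eG xG] dG[OF G eG xG] runs(1)] unfolding B_def by blast
  have cc: "concat (map PS [0..<en t]) = concat (map B [0..<t])" for t
    unfolding en_def B_def by (rule concat_enum[OF inf]) (auto simp: NE_def)
  have TTt: "runOf (tG l n G) (En (l+i)) = papp (concat (map B [0..<t])) (runOf (tG l n G) (En (EE (en t))))" for t
    using E3(2)[of "en t"] cc by simp
  obtain ws where ws: "runOf (tG l n G) (En (l+i)) = RInf ws"
  proof (cases "runOf (tG l n G) (En (l+i))")
    case (RFin P tm)
    define X where "X = concat (map B [0..<Suc (length P)])"
    have "papp X (runOf (tG l n G) (En (EE (en (Suc (length P)))))) = RFin P tm"
      using TTt[of "Suc (length P)"] RFin unfolding X_def by simp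
    then obtain qs where "P = X @ qs" using papp_Fin_inv by blast
    then have "length X \<le> length P" by simp
    moreover have "Suc (length P) \<le> length X" unfolding X_def by (rule len_concat_ne[OF Bne])
    ultimately show ?thesis by simp
  next
    case (RInf ws)
    then show ?thesis using that by blast
  qed
  have pre: "\<forall>t k. k < length (B t) \<longrightarrow> ws (length (concat (map B [0..<t])) + k) = B t ! k"
  proof (intro allI impI)
    fix t k assume k: "k < length (B t)"
    have "RInf ws = papp (concat (map B [0..<t]) @ B t) (runOf (tG l n G) (En (EE (en (Suc t)))))"
      using TTt[of "Suc t"] ws by simp
    then obtain ws' where "ws = shl (concat (map B [0..<t]) @ B t) ws'"
      by (cases "runOf (tG l n G) (En (EE (en (Suc t))))") (auto simp: papp_Fin papp_Inf)
    then show "ws (length (concat (map B [0..<t])) + k) = B t ! k"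
      using k by (simp add: shl_def nth_append)
  qed
  have "bnd ws" using runOf_bnd[OF tG_wfg[OF G eG xG] tG_det[OF G eG xG] ws] .
  then obtain W where W: "\<forall>k. \<bar>ws k\<bar> \<le> W" unfolding bnd_def by blast
  have seg: "mpv ws \<longleftrightarrow> mpv (\<lambda>t. sum_list (B t))" using mpv_seg[OF Bne Blen W pre] .
  have Wset: "{j. \<exists>r k. vseq l (Wsem G) i j = Some (Wgt r k) \<and> k \<in> {1..l}} = Suc ` NE"
  proof (rule set_eqI)
    fix j
    show "j \<in> {j. \<exists>r k. vseq l (Wsem G) i j = Some (Wgt r k) \<and> k \<in> {1..l}} \<longleftrightarrow> j \<in> Suc ` NE"
    proof (cases j)
      case 0
      then show ?thesis by simp
    next
      case (Suc j')
      then show ?thesis using vall[of j'] Wj[of j'] runs(2)[of j'] by (auto simp: NE_def)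
    qed
  qed
  have enW: "enumerate (Suc ` NE) t = Suc (en t)" for t
    unfolding en_def by (rule enumerate_Suc_image[OF inf])
  have w': "(case the (vseq l (Wsem G) i (enumerate (Suc ` NE) t)) of Wgt r k \<Rightarrow> r | _ \<Rightarrow> 0) = sum_list (B t)" for t
    using enW vall[of "en t"] Wj[of "en t"] Bne unfolding B_def by simp
  have st0: "strace l n (Wsem G) i = (let Wset = {j. \<exists>r k. vseq l (Wsem G) i j = Some (Wgt r k) \<and> k \<in> {1..l}};
            w' = (\<lambda>t. case the (vseq l (Wsem G) i (enumerate Wset t)) of Wgt r k \<Rightarrow> r | _ \<Rightarrow> 0)
        in (if Liminf sequentially (\<lambda>N. ereal ((\<Sum>t<N. w' t) / real N)) \<ge> 0
            then EStar else AStar))"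
    unfolding strace_def by (rule if_not_P[OF nex])
  have st: "strace l n (Wsem G) i = (if mpv (\<lambda>t. sum_list (B t)) then EStar else AStar)"
    unfolding st0 Let_def Wset w' mpv_def by simp
  show ?thesis using st seg ws by simp
qed

theorem sem_trace: "strace l n (Wsem G) i = Wsem (gtrace l m n G) i"
proof -
  have "Wsem (gtrace l m n G) i = outcome (maprun (\<lambda>y. y - l) (runOf (tG l n G) (En (l + i))))"
    using Wsem_outcome gtr_runOf[OF G eG xG i] by metis
  moreover have "strace l n (Wsem G) i = outcome (maprun (\<lambda>y. y - l) (runOf (tG l n G) (En (l + i))))"
    using sem_fin sem_inf by blast
  ultimately show ?thesis by simp
qed

end

theorem theoremD5:
  shows "(\<forall>(C::'a game) (D::'b game). is_roPG C \<and> is_roPG D \<and> ext C = ent D \<longrightarrow>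
            (\<forall>i\<in>{1..ent C}. Wsem (gseq C D) i = semcomp (Wsem C) (Wsem D) i))
       \<and> (\<forall>(C::'a game) (D::'b game). is_roPG C \<and> is_roPG D \<longrightarrow>
            (\<forall>i\<in>{1..ent C + ent D}.
               Wsem (gpar C D) i = spar (ent C) (ext C) (Wsem C) (Wsem D) i))
       \<and> (\<forall>(G::'c game) l m n. is_roPG G \<and> ent G = l + m \<and> ext G = l + n \<longrightarrow>
            (\<forall>i\<in>{1..m}. strace l n (Wsem G) i = Wsem (gtrace l m n G) i))"
proof (intro conjI allI impI ballI)
  fix C :: "'a game" and D :: "'b game" and i
  assume "is_roPG C \<and> is_roPG D \<and> ext C = ent D" and "i \<in> {1..ent C}"
  then show "Wsem (gseq C D) i = semcomp (Wsem C) (Wsem D) i" using part1 by blast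
next
  fix C :: "'a game" and D :: "'b game" and i
  assume "is_roPG C \<and> is_roPG D" and "i \<in> {1..ent C + ent D}"
  then show "Wsem (gpar C D) i = spar (ent C) (ext C) (Wsem C) (Wsem D) i" using part2 by blast
next
  fix G :: "'c game" and l m n i
  assume "is_roPG G \<and> ent G = l + m \<and> ext G = l + n" and "i \<in> {1..m}"
  then show "strace l n (Wsem G) i = Wsem (gtrace l m n G) i" using sem_trace by blast
qed

end
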